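(* Suppose the constraint qualification below holds, let $\{(x^k,y^k,z^k)\}$ be generated by Algorithm G-ADMM-M with parameters $\sigma>0$, $\rho\in(0,2)$, and let $(\bar x,\bar y,\bar z)\in\mathbb{W}^*$. Let $\lambda\in(0,1]$. Then for every integer $k>1$, $$\Big(\Psi_k(\bar x,\bar y,\bar z)+(2-\rho)\|\widetilde x^k-x^k\|^2_{\widehat\Sigma_{f_1}+\mathcal S}+\sigma(1-\lambda)(2-\rho)\|\mathcal{A}^*x^k+\mathcal{B}^*y^{k-1}-c\|^2\Big)$$ $$-\Big(\Psi_{k+1}(\bar x,\bar y,\bar z)+(2-\rho)\|\widetilde x^{k+1}-x^{k+1}\|^2_{\widehat\Sigma_{f_1}+\mathcal S}+\sigma(1-\lambda)(2-\rho)\|\mathcal{A}^*x^{k+1}+\mathcal{B}^*y^{k}-c\|^2\Big)\ \ge\ \delta_k-\xi_k.$$ Moreover, if $\lambda\in(\tfrac12,1]$, $\widehat\Sigma_{h_1}+\mathcal T\succ0$, $\mathcal F\succ0$, $\mathcal H\succ0$, and $\sum_{k=1}^\infty\xi_k<+\infty$, then $\{(x^k,y^k)\}$ converges to an optimal solution of the problem and $\{z^k\}$ converges to an optimal solution of its dual problem (a Lagrange multiplier $z$ such that the limit triple lies in $\mathbb{W}^*$).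
   Context: Let $\mathbb{X},\mathbb{Y},\mathbb{Z}$ be finite-dimensional real Euclidean spaces with inner product $\langle\cdot,\cdot\rangle$ and induced norm $\|\cdot\|$. For a self-adjoint linear operator $\mathcal{G}$, $\|u\|_{\mathcal G}^2:=\langle u,\mathcal G u\rangle$. Let $f_1:\mathbb{X}\to\mathbb{R}$ and $h_1:\mathbb{Y}\to\mathbb{R}$ be convex, continuously differentiable with globally Lipschitz continuous gradients, and $f_2:\mathbb{X}\to(-\infty,+\infty]$, $h_2:\mathbb{Y}\to(-\infty,+\infty]$ closed proper convex. Let $\mathcal{A}:\mathbb{Z}\to\mathbb{X}$, $\mathcal{B}:\mathbb{Z}\to\mathbb{Y}$ be linear with adjoints $\mathcal{A}^*,\mathcal{B}^*$, and $c\in\mathbb{Z}$. The problem is $\min\{f_1(x)+f_2(x)+h_1(y)+h_2(y): \mathcal{A}^*x+\mathcal{B}^*y=c\}$. Let $\Sigma_{f_1}\preceq\widehat\Sigma_{f_1}$ be self-adjoint positive semidefinite operators on $\mathbb{X}$ with $\tfrac12\|x-x'\|_{\Sigma_{f_1}}^2\le f_1(x)-f_1(x')-\langle x-x',\nabla f_1(x')\rangle\le\tfrac12\|x-x'\|_{\widehat\Sigma_{f_1}}^2$ for all $x,x'$, and likewise $\Sigma_{h_1}\preceq\widehat\Sigma_{h_1}$ on $\mathbb{Y}$ for $h_1$. Constraint qualification: there exists $(x^0,y^0)\in\operatorname{ri}(\operatorname{dom}f_2\times\operatorname{dom}h_2)$ with $\mathcal{A}^*x^0+\mathcal{B}^*y^0=c$.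 $\mathbb{W}^*$ denotes the set of $(\bar x,\bar y,\bar z)\in\mathbb{X}\times\mathbb{Y}\times\mathbb{Z}$ with $0\in\partial f_2(\bar x)+\nabla f_1(\bar x)+\mathcal{A}\bar z$, $0\in\partial h_2(\bar y)+\nabla h_1(\bar y)+\mathcal{B}\bar z$, $\mathcal{A}^*\bar x+\mathcal{B}^*\bar y=c$. Algorithm G-ADMM-M: choose $\sigma>0$, $\rho\in(0,2)$, self-adjoint positive semidefinite $\mathcal S$ on $\mathbb{X}$ and $\mathcal T$ on $\mathbb{Y}$ such that $\mathcal F:=\widehat\Sigma_{f_1}+\mathcal S+\sigma\mathcal{A}\mathcal{A}^*\succ0$ and $\mathcal H:=\widehat\Sigma_{h_1}+\mathcal T+\sigma\mathcal{B}\mathcal{B}^*\succ0$, and $\widetilde\omega^0=(\widetilde x^0,\widetilde y^0,\widetilde z^0)\in\operatorname{dom}f_2\times\operatorname{dom}h_2\times\mathbb{Z}$. For $k=0,1,2,\dots$: $x^k=\arg\min_x\{f_2(x)+\tfrac12\langle x,\mathcal F x\rangle+\langle\nabla f_1(\widetilde x^k)+\sigma\mathcal{A}(\mathcal{A}^*\widetilde x^k+\mathcal{B}^*\widetilde y^k-c+\sigma^{-1}\widetilde z^k)-\mathcal F\widetilde x^k,x\rangle\}$; $z^k=\widetilde z^k+\sigma(\mathcal{A}^*x^k+\mathcal{B}^*\widetilde y^k-c)$; $y^k=\arg\min_y\{h_2(y)+\tfrac12\langle y,\mathcal H y\rangle+\langle\nabla h_1(\widetilde y^k)+\sigma\mathcal{B}(\mathcal{A}^*x^k+\mathcal{B}^*\widetilde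 y^k-c+\sigma^{-1}z^k)-\mathcal H\widetilde y^k,y\rangle\}$; $\widetilde\omega^{k+1}=\widetilde\omega^k+\rho(\omega^k-\widetilde\omega^k)$ where $\omega^k=(x^k,y^k,z^k)$, $\widetilde\omega^k=(\widetilde x^k,\widetilde y^k,\widetilde z^k)$. Notation: for fixed $(\bar x,\bar y,\bar z)$, $x_e^k:=x^k-\bar x$, $y_e^k:=y^k-\bar y$, $z_e^k:=z^k-\bar z$, $\widetilde x_e^k:=\widetilde x^k-\bar x$, $\widetilde y_e^k:=\widetilde y^k-\bar y$. Define $\Psi_k(\bar x,\bar y,\bar z):=\frac{1}{\sigma\rho}\|z_e^k+\sigma(\rho-1)\mathcal{A}^*x_e^k\|^2+\sigma(2-\rho)\|\mathcal{A}^*x_e^k\|^2+\frac1\rho\|\widetilde x_e^{k+1}\|^2_{\widehat\Sigma_{f_1}+\mathcal S}+\frac1\rho\|\widetilde y_e^{k}\|^2_{\widehat\Sigma_{h_1}+\mathcal T}$; $\delta_k:=\|\widetilde x^{k+1}-x^{k+1}\|^2_{\frac12\Sigma_{f_1}}+\|\widetilde y^k-y^k\|^2_{\frac12\Sigma_{h_1}+(2-\rho)(\widehat\Sigma_{h_1}+\mathcal T)}+(1-\lambda)(2-\rho)\|\widetilde x^k-x^k\|^2_{\widehat\Sigma_{f_1}+\mathcal S}+\sigma(2\lambda-1)(2-\rho)\|\mathcal{A}^*x^{k+1}+\mathcal{B}^*y^k-c\|^2+\frac{\sigma(1-\lambda)(2-\rho)}{2}\|\mathcal{B}^*(y^k-y^{k-1})\|^2+\frac{\lambda(2-\rho)^2}{\rho}\|x^{k+1}-x^k\|^2_{\widehat\Sigma_{f_1}+\mathcal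 S+\sigma\mathcal{A}\mathcal{A}^*}$; $\xi_k:=\|\widetilde x^{k+1}-x^{k+1}\|^2_{\widehat\Sigma_{f_1}}+\|\widetilde y^k-y^k\|^2_{\widehat\Sigma_{h_1}}$. *)

theory Defs
  imports "HOL-Analysis.Analysis"
begin

definition psd_op :: "('a::euclidean_space \<Rightarrow> 'a) \<Rightarrow> bool" where
  "psd_op G \<longleftrightarrow> linear G \<and> (\<forall>u v. G u \<bullet> v = u \<bullet> G v) \<and> (\<forall>u. 0 \<le> u \<bullet> G u)"

definition pd_op :: "('a::euclidean_space \<Rightarrow> 'a) \<Rightarrow> bool" where
  "pd_op G \<longleftrightarrow> psd_op G \<and> (\<forall>u. u \<noteq> 0 \<longrightarrow> 0 < u \<bullet> G u)"

definition opadd :: "('a::real_vector \<Rightarrow> 'a) \<Rightarrow> ('a \<Rightarrow> 'a) \<Rightarrow> 'a \<Rightarrow> 'a" where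
  "opadd G K = (\<lambda>u. G u + K u)"

definition qn :: "('a::real_inner \<Rightarrow> 'a) \<Rightarrow> 'a \<Rightarrow> real" where
  "qn G u = u \<bullet> G u"

definition edom :: "('a \<Rightarrow> ereal) \<Rightarrow> 'a set" where
  "edom f = {x. f x < \<infinity>}"

definition proper_fun :: "('a \<Rightarrow> ereal) \<Rightarrow> bool" where
  "proper_fun f \<longleftrightarrow> (\<forall>x. f x \<noteq> -\<infinity>) \<and> (\<exists>x. f x < \<infinity>)"

definition convex_fun :: "('a::real_vector \<Rightarrow> ereal) \<Rightarrow> bool" where
  "convex_fun f \<longleftrightarrow> convex {(x, t::real). f x \<le> ereal t}"

definition closed_fun :: "('a::real_normed_vector \<Rightarrow> ereal) \<Rightarrow> bool" where
  "closed_fun f \<longleftrightarrow> closed {(x, t::real). f x \<le> ereal t}"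

definition subdiff :: "('a::real_inner \<Rightarrow> ereal) \<Rightarrow> 'a \<Rightarrow> 'a set" where
  "subdiff f x = {g. f x \<noteq> \<infinity> \<and> (\<forall>y. f x + ereal (g \<bullet> (y - x)) \<le> f y)}"

text \<open>KKT set W* for  min f1 x + f2 x + h1 y + h2 y  s.t.  A* x + B* y = c.\<close>
definition Wstar ::
  "('x::euclidean_space \<Rightarrow> 'x) \<Rightarrow> ('x \<Rightarrow> ereal) \<Rightarrow> ('y::euclidean_space \<Rightarrow> 'y) \<Rightarrow> ('y \<Rightarrow> ereal)
   \<Rightarrow> ('z::euclidean_space \<Rightarrow> 'x) \<Rightarrow> ('z \<Rightarrow> 'y) \<Rightarrow> 'z \<Rightarrow> ('x \<times> 'y \<times> 'z) set" where
  "Wstar gf1 f2 gh1 h2 A B c =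
     {(x, y, z). (\<exists>g\<in>subdiff f2 x. g + gf1 x + A z = 0)
               \<and> (\<exists>g\<in>subdiff h2 y. g + gh1 y + B z = 0)
               \<and> adjoint A x + adjoint B y = c}"

definition primal_obj ::
  "('x \<Rightarrow> real) \<Rightarrow> ('x \<Rightarrow> ereal) \<Rightarrow> ('y \<Rightarrow> real) \<Rightarrow> ('y \<Rightarrow> ereal) \<Rightarrow> 'x \<Rightarrow> 'y \<Rightarrow> ereal" where
  "primal_obj f1 f2 h1 h2 x y = ereal (f1 x) + f2 x + ereal (h1 y) + h2 y"

definition lagrangian ::
  "('x::euclidean_space \<Rightarrow> real) \<Rightarrow> ('x \<Rightarrow> ereal) \<Rightarrow> ('y::euclidean_space \<Rightarrow> real) \<Rightarrow> ('y \<Rightarrow> ereal)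
   \<Rightarrow> ('z::euclidean_space \<Rightarrow> 'x) \<Rightarrow> ('z \<Rightarrow> 'y) \<Rightarrow> 'z \<Rightarrow> 'x \<Rightarrow> 'y \<Rightarrow> 'z \<Rightarrow> ereal" where
  "lagrangian f1 f2 h1 h2 A B c x y z =
     primal_obj f1 f2 h1 h2 x y + ereal (z \<bullet> (adjoint A x + adjoint B y - c))"

definition dual_fun ::
  "('x::euclidean_space \<Rightarrow> real) \<Rightarrow> ('x \<Rightarrow> ereal) \<Rightarrow> ('y::euclidean_space \<Rightarrow> real) \<Rightarrow> ('y \<Rightarrow> ereal)
   \<Rightarrow> ('z::euclidean_space \<Rightarrow> 'x) \<Rightarrow> ('z \<Rightarrow> 'y) \<Rightarrow> 'z \<Rightarrow> 'z \<Rightarrow> ereal" where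
  "dual_fun f1 f2 h1 h2 A B c z = (INF p. lagrangian f1 f2 h1 h2 A B c (fst p) (snd p) z)"

definition primal_optimal ::
  "('x::euclidean_space \<Rightarrow> real) \<Rightarrow> ('x \<Rightarrow> ereal) \<Rightarrow> ('y::euclidean_space \<Rightarrow> real) \<Rightarrow> ('y \<Rightarrow> ereal)
   \<Rightarrow> ('z::euclidean_space \<Rightarrow> 'x) \<Rightarrow> ('z \<Rightarrow> 'y) \<Rightarrow> 'z \<Rightarrow> 'x \<Rightarrow> 'y \<Rightarrow> bool" where
  "primal_optimal f1 f2 h1 h2 A B c x y \<longleftrightarrow>
     adjoint A x + adjoint B y = c \<and>
     (\<forall>x' y'. adjoint A x' + adjoint B y' = c \<longrightarrow>
        primal_obj f1 f2 h1 h2 x y \<le> primal_obj f1 f2 h1 h2 x' y')"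

definition dual_optimal ::
  "('x::euclidean_space \<Rightarrow> real) \<Rightarrow> ('x \<Rightarrow> ereal) \<Rightarrow> ('y::euclidean_space \<Rightarrow> real) \<Rightarrow> ('y \<Rightarrow> ereal)
   \<Rightarrow> ('z::euclidean_space \<Rightarrow> 'x) \<Rightarrow> ('z \<Rightarrow> 'y) \<Rightarrow> 'z \<Rightarrow> 'z \<Rightarrow> bool" where
  "dual_optimal f1 f2 h1 h2 A B c z \<longleftrightarrow>
     (\<forall>z'. dual_fun f1 f2 h1 h2 A B c z' \<le> dual_fun f1 f2 h1 h2 A B c z)"

end

theory Submission
  imports Defs
begin

lemma psd_linear: "psd_op G \<Longrightarrow> linear G" by (simp add: psd_op_def)
lemma psd_sym: "psd_op G \<Longrightarrow> G u \<bullet> v = u \<bullet> G v" by (simp add: psd_op_def)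
lemma psd_nonneg: "psd_op G \<Longrightarrow> 0 \<le> qn G u" by (simp add: psd_op_def qn_def)

lemma qn_add: assumes "psd_op G" shows "qn G (u + v) = qn G u + 2 * (G u \<bullet> v) + qn G v"
proof -
  interpret linear G using psd_linear[OF assms] .
  have "u \<bullet> G v = G u \<bullet> v" using psd_sym[OF assms] by simp
  moreover have "v \<bullet> G u = G u \<bullet> v" by (simp add: inner_commute)
  ultimately show ?thesis by (simp add: qn_def add inner_add_left inner_add_right)
qed

lemma qn_diff: assumes "psd_op G" shows "qn G (u - v) = qn G u - 2 * (G u \<bullet> v) + qn G v"
proof -
  interpret linear G using psd_linear[OF assms] .
  have "u \<bullet> G v = G u \<bullet> v" using psd_sym[OF assms] by simp
  moreover have "v \<bullet> G u = G u \<bullet> v" by (simp add: inner_commute)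
  ultimately show ?thesis by (simp add: qn_def diff inner_diff_left inner_diff_right)
qed

lemma qn_scale: assumes "linear G" shows "qn G (r *\<^sub>R u) = r^2 * qn G u"
proof -
  interpret linear G by fact
  show ?thesis by (simp add: qn_def scale power2_eq_square)
qed

lemma qn_minus_commute: assumes "linear G" shows "qn G (u - v) = qn G (v - u)"
proof -
  interpret linear G by fact
  show ?thesis by (simp add: qn_def diff inner_diff_left inner_diff_right)
qed

lemma qn_opadd: "qn (opadd G K) u = qn G u + qn K u"
  by (simp add: qn_def opadd_def inner_add_right)

lemma psd_opadd: assumes "psd_op G" "psd_op K" shows "psd_op (opadd G K)"
  using assms unfolding psd_op_def opadd_def
  by (auto simp: linear_compose_add inner_add_left inner_add_right add_nonneg_nonneg)

lemma qn_le_of_psd_diff: assumes "psd_op (\<lambda>u. G u - K u)" shows "qn K u \<le> qn G u"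
  using psd_nonneg[OF assms, of u] by (simp add: qn_def inner_diff_right)

lemma qn_sum_nonneg: assumes "psd_op G" shows "qn G u + qn G v \<ge> (1/2) * qn G (u - v)"
proof -
  have "qn G (u + v) \<ge> 0" using psd_nonneg[OF assms] .
  then show ?thesis using qn_add[OF assms, of u v] qn_diff[OF assms, of u v] by simp
qed

lemma convex_fun_ineq:
  assumes cf: "convex_fun f" and fx: "f x = ereal a" and fu: "f u = ereal b"
    and t: "0 \<le> t" "t \<le> 1"
  shows "f (x + t *\<^sub>R (u - x)) \<le> ereal ((1 - t) * a + t * b)"
proof -
  let ?E = "{(x, t::real). f x \<le> ereal t}"
  have "convex ?E" using cf by (simp add: convex_fun_def)
  moreover have "(x, a) \<in> ?E" "(u, b) \<in> ?E" using fx fu by auto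
  ultimately have "(1 - t) *\<^sub>R (x, a) + t *\<^sub>R (u, b) \<in> ?E"
    using t unfolding convex_def by auto
  moreover have "(1 - t) *\<^sub>R (x, a) + t *\<^sub>R (u, b) = (x + t *\<^sub>R (u - x), (1 - t) * a + t * b)"
    by (simp add: algebra_simps)
  ultimately show ?thesis by simp
qed

lemma min_quad_subgrad:
  assumes cf: "convex_fun f" and pf: "proper_fun f" and G: "psd_op G"
    and mn: "\<And>u. f x + ereal ((1/2) * (x \<bullet> G x) + g \<bullet> x) \<le> f u + ereal ((1/2) * (u \<bullet> G u) + g \<bullet> u)"
  shows "f x \<noteq> \<infinity> \<and> (\<forall>u. f x + ereal ((- (G x + g)) \<bullet> (u - x)) \<le> f u)"
proof -
  interpret linear G using psd_linear[OF G] .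
  obtain u0 where u0: "f u0 < \<infinity>" using pf by (auto simp: proper_fun_def)
  have finx: "f x \<noteq> \<infinity>"
  proof
    assume "f x = \<infinity>"
    then have "f u0 + ereal ((1/2) * (u0 \<bullet> G u0) + g \<bullet> u0) = \<infinity>" using mn[of u0] by simp
    then show False using u0 by simp
  qed
  moreover have "f x \<noteq> -\<infinity>" using pf by (simp add: proper_fun_def)
  ultimately obtain a where fa: "f x = ereal a" by (cases "f x") auto
  have "\<forall>u. f x + ereal ((- (G x + g)) \<bullet> (u - x)) \<le> f u"
  proof (intro allI)
   fix u show "f x + ereal ((- (G x + g)) \<bullet> (u - x)) \<le> f u"
  proof (cases "f u = \<infinity>")
    case True then show ?thesis by simp
  next
    case False
    moreover have "f u \<noteq> -\<infinity>" using pf by (simp add: proper_fun_def)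
    ultimately obtain b where fb: "f u = ereal b" by (cases "f u") auto
    define d where "d = u - x"
    define c where "c = (G x + g) \<bullet> d"
    define Q where "Q = d \<bullet> G d"
    have Q0: "Q \<ge> 0" using psd_nonneg[OF G, of d] by (simp add: Q_def qn_def)
    have key: "a \<le> b + c + t / 2 * Q" if t: "0 < t" "t \<le> 1" for t
    proof -
      define p where "p = x + t *\<^sub>R d"
      have c1: "f p \<le> ereal ((1 - t) * a + t * b)"
        using convex_fun_ineq[OF cf fa fb, of t] t by (simp add: p_def d_def)
      have c2: "f x + ereal ((1/2) * (x \<bullet> G x) + g \<bullet> x) \<le> f p + ereal ((1/2) * (p \<bullet> G p) + g \<bullet> p)"
        by (rule mn)
      have pq: "(1/2) * (p \<bullet> G p) + g \<bullet> p = (1/2) * (x \<bullet> G x) + g \<bullet> x + t * c + t^2 / 2 * Q"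
      proof -
        have s: "x \<bullet> G d = G x \<bullet> d" using psd_sym[OF G, of x d] by simp
        have "p \<bullet> G p = x \<bullet> G x + 2 * t * (G x \<bullet> d) + t^2 * Q"
          unfolding p_def Q_def
          by (simp add: add scale inner_add_left inner_add_right s inner_commute[of d "G x"] power2_eq_square algebra_simps)
        then show ?thesis unfolding p_def c_def by (simp add: inner_add_left inner_add_right algebra_simps)
      qed
      have "ereal (a + ((1/2) * (x \<bullet> G x) + g \<bullet> x)) \<le> ereal ((1 - t) * a + t * b + ((1/2) * (x \<bullet> G x) + g \<bullet> x + t * c + t^2 / 2 * Q))"
      proof -
        have "f x + ereal ((1/2) * (x \<bullet> G x) + g \<bullet> x) \<le> ereal ((1 - t) * a + t * b) + ereal ((1/2) * (p \<bullet> G p) + g \<bullet> p)"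
          using c2 c1 by (meson add_right_mono order_trans)
        then show ?thesis using fa pq by simp
      qed
      then have "t * a \<le> t * (b + c + t / 2 * Q)" by (simp add: algebra_simps power2_eq_square)
      then show ?thesis using t by simp
    qed
    have ac: "a \<le> b + c"
    proof (rule ccontr)
      assume "\<not> a \<le> b + c"
      define e where "e = a - (b + c)"
      have e: "e > 0" using \<open>\<not> a \<le> b + c\<close> by (simp add: e_def)
      define t where "t = min 1 (e / (Q + 1))"
      have t: "0 < t" "t \<le> 1" using e Q0 by (auto simp: t_def)
      have "t \<le> e / (Q + 1)" by (simp add: t_def)
      then have "t * Q \<le> e / (Q + 1) * Q" using Q0 by (rule mult_right_mono)
      also have "\<dots> < e" using e Q0 by (simp add: field_simps)
      finally have "t * Q < e" .
      then have "t / 2 * Q < e" using e t Q0 by (simp add: field_simps)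
      then show False using key[OF t] by (simp add: e_def)
    qed
    have "(- (G x + g)) \<bullet> (u - x) = - ((G x + g) \<bullet> (u - x))" by (simp only: inner_minus_left)
    then show ?thesis using ac fa fb by (simp add: c_def d_def)
  qed
  qed
  with finx show ?thesis by blast
qed


lemma grad_L1:
  fixes f :: "'a::euclidean_space \<Rightarrow> real"
  assumes bnd: "\<And>u u'. (1/2) * qn L (u - u') \<le> f u - f u' - (u - u') \<bullet> g u'
                        \<and> f u - f u' - (u - u') \<bullet> g u' \<le> (1/2) * qn H (u - u')"
    and L: "psd_op L"
  shows "(g xt - g xb) \<bullet> (x - xb) \<ge> (1/4) * qn L (x - xt) - (1/2) * qn H (x - xt)"
proof -
  have 1: "f x - f xt - (x - xt) \<bullet> g xt \<le> (1/2) * qn H (x - xt)" using bnd by blast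
  have 2: "(1/2) * qn L (xb - xt) \<le> f xb - f xt - (xb - xt) \<bullet> g xt" using bnd by blast
  have 3: "(1/2) * qn L (x - xb) \<le> f x - f xb - (x - xb) \<bullet> g xb" using bnd by blast
  have 4: "qn L (x - xb) + qn L (xt - xb) \<ge> (1/2) * qn L ((x - xb) - (xt - xb))"
    by (rule qn_sum_nonneg[OF L])
  have 5: "qn L (xb - xt) = qn L (xt - xb)" using qn_minus_commute[OF psd_linear[OF L]] by blast
  have 6: "(g xt - g xb) \<bullet> (x - xb) = (x - xt) \<bullet> g xt - (xb - xt) \<bullet> g xt - (x - xb) \<bullet> g xb"
    by (simp add: inner_diff_left inner_diff_right inner_commute)
  show ?thesis using 1 2 3 4 5 6 by simp
qed

lemma grad_L2:
  fixes f :: "'a::euclidean_space \<Rightarrow> real"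
  assumes bnd: "\<And>u u'. (1/2) * qn L (u - u') \<le> f u - f u' - (u - u') \<bullet> g u'
                        \<and> f u - f u' - (u - u') \<bullet> g u' \<le> (1/2) * qn H (u - u')"
    and L: "psd_op L" and H: "psd_op H"
  shows "(g p - g q) \<bullet> d \<ge> - (1/4) * qn H (p - q - d)"
proof -
  define h where "h = (1/2) *\<^sub>R (p - q - d)"
  have L0: "\<And>w. 0 \<le> qn L w" using psd_nonneg[OF L] .
  have a1: "0 \<le> f (p - h) - f q - ((p - h) - q) \<bullet> g q" using bnd[of "p - h" q] L0[of "p - h - q"] by linarith
  have a2: "f (p - h) - f p - ((p - h) - p) \<bullet> g p \<le> (1/2) * qn H ((p - h) - p)" using bnd by blast
  have a3: "0 \<le> f (q + h) - f p - ((q + h) - p) \<bullet> g p" using bnd[of "q + h" p] L0[of "q + h - p"] by linarith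
  have a4: "f (q + h) - f q - ((q + h) - q) \<bullet> g q \<le> (1/2) * qn H ((q + h) - q)" using bnd by blast
  have q1: "qn H ((p - h) - p) = qn H h" using qn_minus_commute[OF psd_linear[OF H], of "p - h" p] by simp
  have q2: "qn H h = (1/4) * qn H (p - q - d)" unfolding h_def using qn_scale[OF psd_linear[OF H]] by (simp add: power2_eq_square)
  have e: "((p - h) - q) \<bullet> g q - ((p - h) - p) \<bullet> g p + ((q + h) - p) \<bullet> g p - ((q + h) - q) \<bullet> g q
     = - ((g p - g q) \<bullet> d)"
    unfolding h_def by (simp add: inner_diff_left inner_diff_right inner_add_left inner_commute algebra_simps)
  show ?thesis using a1 a2 a3 a4 q1 q2 e by simp
qed

lemma subgrad_mono:
  assumes pf: "proper_fun f"
    and p: "f p \<noteq> \<infinity>" "\<And>u. f p + ereal (s \<bullet> (u - p)) \<le> f u"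
    and q: "f q \<noteq> \<infinity>" "\<And>u. f q + ereal (t \<bullet> (u - q)) \<le> f u"
  shows "(s - t) \<bullet> (p - q) \<ge> 0"
proof -
  obtain a where a: "f p = ereal a" using p(1) pf by (cases "f p") (auto simp: proper_fun_def)
  obtain b where b: "f q = ereal b" using q(1) pf by (cases "f q") (auto simp: proper_fun_def)
  have 1: "a + s \<bullet> (q - p) \<le> b" using p(2)[of q] a b by simp
  have 2: "b + t \<bullet> (p - q) \<le> a" using q(2)[of p] a b by simp
  have "(s - t) \<bullet> (p - q) = - (s \<bullet> (q - p)) - t \<bullet> (p - q)"
    by (simp add: inner_diff_left inner_diff_right)
  then show ?thesis using 1 2 by simp
qed


locale gadmm =
  fixes f1 :: "'x::euclidean_space \<Rightarrow> real" and gf1 :: "'x \<Rightarrow> 'x"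
    and f2 :: "'x \<Rightarrow> ereal"
    and h1 :: "'y::euclidean_space \<Rightarrow> real" and gh1 :: "'y \<Rightarrow> 'y"
    and h2 :: "'y \<Rightarrow> ereal"
    and A :: "'z::euclidean_space \<Rightarrow> 'x" and B :: "'z \<Rightarrow> 'y" and c :: 'z
    and SF SFh S :: "'x \<Rightarrow> 'x" and SH SHh T :: "'y \<Rightarrow> 'y"
    and \<sigma> \<rho> :: real
    and x xt :: "nat \<Rightarrow> 'x" and y yt :: "nat \<Rightarrow> 'y" and z zt :: "nat \<Rightarrow> 'z"
    and At :: "'x \<Rightarrow> 'z" and Bt :: "'y \<Rightarrow> 'z" and F :: "'x \<Rightarrow> 'x" and H :: "'y \<Rightarrow> 'y"
  assumes At_def: "At = adjoint A" and Bt_def: "Bt = adjoint B"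
  and F_def: "F = (\<lambda>u. SFh u + S u + \<sigma> *\<^sub>R A (At u))"
  and H_def: "H = (\<lambda>v. SHh v + T v + \<sigma> *\<^sub>R B (Bt v))"
  and linA: "linear A" and linB: "linear B"
  and SF_psd: "psd_op SF" and SFh_psd: "psd_op SFh" and SF_le: "psd_op (\<lambda>u. SFh u - SF u)"
  and SH_psd: "psd_op SH" and SHh_psd: "psd_op SHh" and SH_le: "psd_op (\<lambda>v. SHh v - SH v)"
  and f1_bounds: "\<And>u u'. (1/2) * qn SF (u - u') \<le> f1 u - f1 u' - (u - u') \<bullet> gf1 u'
                        \<and> f1 u - f1 u' - (u - u') \<bullet> gf1 u' \<le> (1/2) * qn SFh (u - u')"
  and h1_bounds: "\<And>v v'. (1/2) * qn SH (v - v') \<le> h1 v - h1 v' - (v - v') \<bullet> gh1 v'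
                        \<and> h1 v - h1 v' - (v - v') \<bullet> gh1 v' \<le> (1/2) * qn SHh (v - v')"
  and f2_cpc: "closed_fun f2 \<and> proper_fun f2 \<and> convex_fun f2"
  and h2_cpc: "closed_fun h2 \<and> proper_fun h2 \<and> convex_fun h2"
  and sigma_pos: "\<sigma> > 0" and rho: "0 < \<rho>" "\<rho> < 2"
  and S_psd: "psd_op S" and T_psd: "psd_op T"
  and F_pd: "pd_op F" and H_pd: "pd_op H"
  and x_step: "\<And>k u. f2 (x k) + ereal ((1/2) * (x k \<bullet> F (x k))
              + (gf1 (xt k) + \<sigma> *\<^sub>R A (At (xt k) + Bt (yt k) - c + (1 / \<sigma>) *\<^sub>R zt k) - F (xt k)) \<bullet> x k)
           \<le> f2 u + ereal ((1/2) * (u \<bullet> F u)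
              + (gf1 (xt k) + \<sigma> *\<^sub>R A (At (xt k) + Bt (yt k) - c + (1 / \<sigma>) *\<^sub>R zt k) - F (xt k)) \<bullet> u)"
  and z_step: "\<And>k. z k = zt k + \<sigma> *\<^sub>R (At (x k) + Bt (yt k) - c)"
  and y_step: "\<And>k v. h2 (y k) + ereal ((1/2) * (y k \<bullet> H (y k))
              + (gh1 (yt k) + \<sigma> *\<^sub>R B (At (x k) + Bt (yt k) - c + (1 / \<sigma>) *\<^sub>R z k) - H (yt k)) \<bullet> y k)
           \<le> h2 v + ereal ((1/2) * (v \<bullet> H v)
              + (gh1 (yt k) + \<sigma> *\<^sub>R B (At (x k) + Bt (yt k) - c + (1 / \<sigma>) *\<^sub>R z k) - H (yt k)) \<bullet> v)"
  and relax_x: "\<And>k. xt (Suc k) = xt k + \<rho> *\<^sub>R (x k - xt k)"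
  and relax_y: "\<And>k. yt (Suc k) = yt k + \<rho> *\<^sub>R (y k - yt k)"
  and relax_z: "\<And>k. zt (Suc k) = zt k + \<rho> *\<^sub>R (z k - zt k)"
begin

definition "Sx = opadd SFh S"
definition "Sy = opadd SHh T"
definition "sx k = - (gf1 (xt k) + A (z k) + Sx (x k - xt k))"
definition "sy k = - (gh1 (yt k) + B (z k + \<sigma> *\<^sub>R (At (x k) + Bt (y k) - c)) + Sy (y k - yt k))"

lemma linAt: "linear At" unfolding At_def by (rule adjoint_linear[OF linA])
lemma linBt: "linear Bt" unfolding Bt_def by (rule adjoint_linear[OF linB])
lemma adjA: "A w \<bullet> u = w \<bullet> At u" unfolding At_def using adjoint_clauses(2)[OF linA] by (simp add: inner_commute)
lemma adjB: "B w \<bullet> u = w \<bullet> Bt u" unfolding Bt_def using adjoint_clauses(2)[OF linB] by (simp add: inner_commute)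
lemma Sx_psd: "psd_op Sx" unfolding Sx_def by (rule psd_opadd[OF SFh_psd S_psd])
lemma Sy_psd: "psd_op Sy" unfolding Sy_def by (rule psd_opadd[OF SHh_psd T_psd])
lemma linSx: "linear Sx" by (rule psd_linear[OF Sx_psd])
lemma linSy: "linear Sy" by (rule psd_linear[OF Sy_psd])
lemma F_psd: "psd_op F" using F_pd by (simp add: pd_op_def)
lemma H_psd: "psd_op H" using H_pd by (simp add: pd_op_def)
lemma f2_props: "closed_fun f2" "proper_fun f2" "convex_fun f2" using f2_cpc by auto
lemma h2_props: "closed_fun h2" "proper_fun h2" "convex_fun h2" using h2_cpc by auto

lemma F_eq: "F u = Sx u + \<sigma> *\<^sub>R A (At u)" by (simp add: F_def Sx_def opadd_def)
lemma H_eq: "H u = Sy u + \<sigma> *\<^sub>R B (Bt u)" by (simp add: H_def Sy_def opadd_def)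

lemma qnF: "qn F u = qn Sx u + \<sigma> * (norm (At u))\<^sup>2"
  by (simp add: qn_def F_eq inner_add_right adjA[symmetric] power2_norm_eq_inner inner_commute)
lemma qnSx_ge: "qn SFh u \<le> qn Sx u" using psd_nonneg[OF S_psd, of u] by (simp add: Sx_def qn_opadd)
lemma qnSy_ge: "qn SHh u \<le> qn Sy u" using psd_nonneg[OF T_psd, of u] by (simp add: Sy_def qn_opadd)

lemma sub_x: "f2 (x k) \<noteq> \<infinity> \<and> (\<forall>u. f2 (x k) + ereal (sx k \<bullet> (u - x k)) \<le> f2 u)"
proof -
  define g where "g = gf1 (xt k) + \<sigma> *\<^sub>R A (At (xt k) + Bt (yt k) - c + (1 / \<sigma>) *\<^sub>R zt k) - F (xt k)"
  have m: "f2 (x k) \<noteq> \<infinity> \<and> (\<forall>u. f2 (x k) + ereal ((- (F (x k) + g)) \<bullet> (u - x k)) \<le> f2 u)"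
    by (rule min_quad_subgrad[OF f2_props(3) f2_props(2) F_psd]) (use x_step in \<open>simp add: g_def\<close>)
  have "F (x k) + g = gf1 (xt k) + A (z k) + Sx (x k - xt k)"
  proof -
    have "A (z k) = A (zt k) + \<sigma> *\<^sub>R A (At (x k)) + \<sigma> *\<^sub>R A (Bt (yt k) - c)"
      by (simp add: z_step linear_add[OF linA] linear_scale[OF linA] linear_diff[OF linA] algebra_simps)
    moreover have "\<sigma> *\<^sub>R A (At (xt k) + Bt (yt k) - c + (1 / \<sigma>) *\<^sub>R zt k)
        = \<sigma> *\<^sub>R A (At (xt k)) + \<sigma> *\<^sub>R A (Bt (yt k) - c) + A (zt k)"
      using sigma_pos by (simp add: linear_add[OF linA] linear_scale[OF linA] linear_diff[OF linA] algebra_simps)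
    moreover have "Sx (x k - xt k) = Sx (x k) - Sx (xt k)" by (rule linear_diff[OF linSx])
    ultimately show ?thesis by (simp add: g_def F_eq algebra_simps)
  qed
  then show ?thesis using m by (simp add: sx_def)
qed

lemma sub_y: "h2 (y k) \<noteq> \<infinity> \<and> (\<forall>u. h2 (y k) + ereal (sy k \<bullet> (u - y k)) \<le> h2 u)"
proof -
  define g where "g = gh1 (yt k) + \<sigma> *\<^sub>R B (At (x k) + Bt (yt k) - c + (1 / \<sigma>) *\<^sub>R z k) - H (yt k)"
  have m: "h2 (y k) \<noteq> \<infinity> \<and> (\<forall>u. h2 (y k) + ereal ((- (H (y k) + g)) \<bullet> (u - y k)) \<le> h2 u)"
    by (rule min_quad_subgrad[OF h2_props(3) h2_props(2) H_psd]) (use y_step in \<open>simp add: g_def\<close>)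
  have "H (y k) + g = gh1 (yt k) + B (z k + \<sigma> *\<^sub>R (At (x k) + Bt (y k) - c)) + Sy (y k - yt k)"
  proof -
    have "B (z k + \<sigma> *\<^sub>R (At (x k) + Bt (y k) - c)) = B (z k) + \<sigma> *\<^sub>R B (At (x k) - c) + \<sigma> *\<^sub>R B (Bt (y k))"
      by (simp add: linear_add[OF linB] linear_scale[OF linB] linear_diff[OF linB] algebra_simps)
    moreover have "\<sigma> *\<^sub>R B (At (x k) + Bt (yt k) - c + (1 / \<sigma>) *\<^sub>R z k)
        = \<sigma> *\<^sub>R B (At (x k) - c) + \<sigma> *\<^sub>R B (Bt (yt k)) + B (z k)"
      using sigma_pos by (simp add: linear_add[OF linB] linear_scale[OF linB] linear_diff[OF linB] algebra_simps)
    moreover have "Sy (y k - yt k) = Sy (y k) - Sy (yt k)" by (rule linear_diff[OF linSy])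
    ultimately show ?thesis by (simp add: g_def H_eq algebra_simps)
  qed
  then show ?thesis using m by (simp add: sy_def)
qed

end

lemma zpart_identity:
  fixes W U0 U V :: "'a::real_inner"
  assumes s: "\<sigma> > 0" and r: "\<rho> > 0"
  defines "W1 \<equiv> W + (\<sigma> * (\<rho> - 1)) *\<^sub>R U0 + \<sigma> *\<^sub>R U + (\<sigma> * \<rho>) *\<^sub>R V"
  shows "(1 / (\<sigma> * \<rho>)) * (norm (W + (\<sigma> * (\<rho> - 1)) *\<^sub>R U0))\<^sup>2
       - (1 / (\<sigma> * \<rho>)) * (norm (W1 + (\<sigma> * (\<rho> - 1)) *\<^sub>R U))\<^sup>2
       + \<sigma> * (2 - \<rho>) * (norm U0)\<^sup>2 - \<sigma> * (2 - \<rho>) * (norm U)\<^sup>2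
     = - 2 * (W1 \<bullet> U) - 2 * ((W + \<sigma> *\<^sub>R (U0 + V)) \<bullet> V) + \<sigma> * (2 - \<rho>) * (norm (U0 + V))\<^sup>2"
proof -
  define P where "P = W + (\<sigma> * (\<rho> - 1)) *\<^sub>R U0"
  have W1P: "W1 + (\<sigma> * (\<rho> - 1)) *\<^sub>R U = P + (\<sigma> * \<rho>) *\<^sub>R (U + V)"
    by (simp add: W1_def P_def algebra_simps)
  have W1P': "W1 = P + \<sigma> *\<^sub>R U + (\<sigma> * \<rho>) *\<^sub>R V" by (simp add: W1_def P_def)
  have h2: "(\<sigma> * 2) *\<^sub>R U0 = \<sigma> *\<^sub>R U0 + \<sigma> *\<^sub>R U0" by (metis scaleR_add_left mult_2_right)
  have WP: "W + \<sigma> *\<^sub>R (U0 + V) = P + (\<sigma> * (2 - \<rho>)) *\<^sub>R U0 + \<sigma> *\<^sub>R V"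
    by (simp add: P_def algebra_simps h2)
  have e1: "(norm (P + (\<sigma> * \<rho>) *\<^sub>R (U + V)))\<^sup>2 = (norm P)\<^sup>2 + 2 * (\<sigma> * \<rho>) * (P \<bullet> U + P \<bullet> V)
        + (\<sigma> * \<rho>)^2 * ((norm U)\<^sup>2 + 2 * (U \<bullet> V) + (norm V)\<^sup>2)"
    unfolding power2_norm_eq_inner by (simp add: inner_add_left inner_add_right inner_commute algebra_simps power2_eq_square)
  have e2: "(norm (U0 + V))\<^sup>2 = (norm U0)\<^sup>2 + 2 * (U0 \<bullet> V) + (norm V)\<^sup>2"
    by (simp add: power2_norm_eq_inner inner_add_left inner_add_right inner_commute)
  have e3: "W1 \<bullet> U = P \<bullet> U + \<sigma> * (norm U)\<^sup>2 + \<sigma> * \<rho> * (U \<bullet> V)"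
    by (simp add: W1P' inner_add_left inner_add_right power2_norm_eq_inner inner_commute)
  have e4: "(W + \<sigma> *\<^sub>R (U0 + V)) \<bullet> V = P \<bullet> V + \<sigma> * (2 - \<rho>) * (U0 \<bullet> V) + \<sigma> * (norm V)\<^sup>2"
    by (simp add: WP inner_add_left power2_norm_eq_inner)
  have "(1 / (\<sigma> * \<rho>)) * ((norm P)\<^sup>2 - (norm (P + (\<sigma> * \<rho>) *\<^sub>R (U + V)))\<^sup>2)
     = - 2 * (P \<bullet> U + P \<bullet> V) - (\<sigma> * \<rho>) * ((norm U)\<^sup>2 + 2 * (U \<bullet> V) + (norm V)\<^sup>2)"
    using s r unfolding e1 by (simp add: field_simps power2_eq_square)
  then show ?thesis
    unfolding W1P P_def[symmetric] e2 e3 e4 by (simp add: algebra_simps)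
qed

lemma norm_pair_ge: fixes a b :: "'a::real_inner"
  shows "(norm a)\<^sup>2 + (norm b)\<^sup>2 \<ge> (1/2) * (norm (a - b))\<^sup>2"
proof -
  have "(norm (a + b))\<^sup>2 \<ge> 0" by simp
  moreover have "(norm (a + b))\<^sup>2 = (norm a)\<^sup>2 + 2 * (a \<bullet> b) + (norm b)\<^sup>2"
    by (simp add: power2_norm_eq_inner inner_add_left inner_add_right inner_commute)
  moreover have "(norm (a - b))\<^sup>2 = (norm a)\<^sup>2 - 2 * (a \<bullet> b) + (norm b)\<^sup>2"
    by (simp add: power2_norm_eq_inner inner_diff_left inner_diff_right inner_commute)
  ultimately show ?thesis by simp
qed

context gadmm begin

lemma z_rel: "z (Suc k) - zb = (z k - zb) + (\<sigma> * (\<rho> - 1)) *\<^sub>R At (x k - xb) + \<sigma> *\<^sub>R At (x (Suc k) - xb)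
     + (\<sigma> * \<rho>) *\<^sub>R Bt (y k - yb)"
  if c: "c = At xb + Bt yb"
proof -
  have zt: "zt k = z k - \<sigma> *\<^sub>R (At (x k) + Bt (yt k) - c)" using z_step[of k] by simp
  have "z (Suc k) = zt (Suc k) + \<sigma> *\<^sub>R (At (x (Suc k)) + Bt (yt (Suc k)) - c)" by (rule z_step)
  also have "\<dots> = z k + (\<sigma> * (\<rho> - 1)) *\<^sub>R (At (x k) + Bt (yt k) - c)
        + \<sigma> *\<^sub>R (At (x (Suc k)) + Bt (yt k) + \<rho> *\<^sub>R (Bt (y k) - Bt (yt k)) - c)"
    by (simp add: relax_z relax_y zt linear_add[OF linBt] linear_scale[OF linBt] linear_diff[OF linBt] algebra_simps)
  finally show ?thesis
    by (simp add: c linear_diff[OF linAt] linear_diff[OF linBt] algebra_simps)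
qed

end

lemma relax_qn:
  assumes G: "psd_op G" and r: "\<rho> > 0"
  shows "(1/\<rho>) * qn G a - (1/\<rho>) * qn G (a + \<rho> *\<^sub>R d) = -2 * (G d \<bullet> (a + d)) + (2 - \<rho>) * qn G d"
proof -
  have 1: "qn G (a + \<rho> *\<^sub>R d) = qn G a + 2 * (G a \<bullet> (\<rho> *\<^sub>R d)) + \<rho>^2 * qn G d"
    using qn_add[OF G] qn_scale[OF psd_linear[OF G]] by simp
  have 2: "G a \<bullet> d = G d \<bullet> a" using psd_sym[OF G, of a d] by (simp add: inner_commute)
  have 3: "G d \<bullet> (a + d) = G d \<bullet> a + qn G d" by (simp add: qn_def inner_add_right inner_commute)
  show ?thesis unfolding 1 3 using r by (simp add: 2 field_simps power2_eq_square)
qed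

lemma final_arith:
  fixes PsiD qx1 qy qSF qSFh qSH qSHh RR \<alpha> MM R2 BB qF \<kappa> \<sigma> \<rho> lam :: real
  assumes KEY: "PsiD \<ge> (2-\<rho>)*qx1 + (2-\<rho>)*qy + ((1/2) * qSF - qSFh) + ((1/2) * qSH - qSHh) + \<sigma>*(2-\<rho>)*RR"
    and NX: "0 \<le> lam * ((2-\<rho>)*\<alpha> + \<sigma>*(2-\<rho>)*RR - \<sigma>*(2-\<rho>)*MM - \<kappa>*qF)"
    and NY: "0 \<le> (1-lam)*(\<sigma>*(2-\<rho>)) * (RR + R2 - (1/2)*BB)"
  shows "PsiD + (2-\<rho>)*\<alpha> + \<sigma>*(1-lam)*(2-\<rho>)*R2 - ((2-\<rho>)*qx1 + \<sigma>*(1-lam)*(2-\<rho>)*MM)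
     \<ge> ((1/2) * qSF + ((1/2) * qSH + (2-\<rho>)*qy) + (1-lam)*(2-\<rho>)*\<alpha> + \<sigma>*(2*lam-1)*(2-\<rho>)*MM
        + (\<sigma>*(1-lam)*(2-\<rho>)/2)*BB + (lam*\<kappa>)*qF) - (qSFh + qSHh)"
proof -
  have e: "PsiD + (2-\<rho>)*\<alpha> + \<sigma>*(1-lam)*(2-\<rho>)*R2 - ((2-\<rho>)*qx1 + \<sigma>*(1-lam)*(2-\<rho>)*MM)
     - (((1/2) * qSF + ((1/2) * qSH + (2-\<rho>)*qy) + (1-lam)*(2-\<rho>)*\<alpha> + \<sigma>*(2*lam-1)*(2-\<rho>)*MM
        + (\<sigma>*(1-lam)*(2-\<rho>)/2)*BB + (lam*\<kappa>)*qF) - (qSFh + qSHh))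
     = (PsiD - ((2-\<rho>)*qx1 + (2-\<rho>)*qy + ((1/2) * qSF - qSFh) + ((1/2) * qSH - qSHh) + \<sigma>*(2-\<rho>)*RR))
       + lam * ((2-\<rho>)*\<alpha> + \<sigma>*(2-\<rho>)*RR - \<sigma>*(2-\<rho>)*MM - \<kappa>*qF)
       + (1-lam)*(\<sigma>*(2-\<rho>)) * (RR + R2 - (1/2)*BB)"
    by (simp add: field_simps)
  show ?thesis using e KEY NX NY by linarith
qed

context gadmm begin

definition Psi :: "'x \<Rightarrow> 'y \<Rightarrow> 'z \<Rightarrow> nat \<Rightarrow> real" where
  "Psi xb yb zb k = (1 / (\<sigma> * \<rho>)) * (norm (z k - zb + (\<sigma> * (\<rho> - 1)) *\<^sub>R At (x k - xb)))\<^sup>2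
                      + \<sigma> * (2 - \<rho>) * (norm (At (x k - xb)))\<^sup>2
                      + (1 / \<rho>) * qn (opadd SFh S) (xt (k + 1) - xb)
                      + (1 / \<rho>) * qn (opadd SHh T) (yt k - yb)"

definition delta :: "real \<Rightarrow> nat \<Rightarrow> real" where
  "delta lam k = qn (\<lambda>u. (1/2) *\<^sub>R SF u) (xt (k + 1) - x (k + 1))
                      + qn (\<lambda>v. (1/2) *\<^sub>R SH v + (2 - \<rho>) *\<^sub>R (SHh v + T v)) (yt k - y k)
                      + (1 - lam) * (2 - \<rho>) * qn (opadd SFh S) (xt k - x k)
                      + \<sigma> * (2 * lam - 1) * (2 - \<rho>) * (norm (At (x (k + 1)) + Bt (y k) - c))\<^sup>2
                      + (\<sigma> * (1 - lam) * (2 - \<rho>) / 2) * (norm (Bt (y k - y (k - 1))))\<^sup>2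
                      + (lam * (2 - \<rho>)\<^sup>2 / \<rho>) * qn F (x (k + 1) - x k)"

definition xi :: "nat \<Rightarrow> real" where
  "xi k = qn SFh (xt (k + 1) - x (k + 1)) + qn SHh (yt k - y k)"

definition E :: "real \<Rightarrow> 'x \<Rightarrow> 'y \<Rightarrow> 'z \<Rightarrow> nat \<Rightarrow> real" where
  "E lam xb yb zb k = Psi xb yb zb k + (2 - \<rho>) * qn (opadd SFh S) (xt k - x k)
                      + \<sigma> * (1 - lam) * (2 - \<rho>) * (norm (At (x k) + Bt (y (k - 1)) - c))\<^sup>2"

lemma kkt_facts:
  assumes "(xb, yb, zb) \<in> Wstar gf1 f2 gh1 h2 A B c"
  shows "c = At xb + Bt yb"
    "f2 xb \<noteq> \<infinity>" "\<And>u. f2 xb + ereal ((- (gf1 xb + A zb)) \<bullet> (u - xb)) \<le> f2 u"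
    "h2 yb \<noteq> \<infinity>" "\<And>u. h2 yb + ereal ((- (gh1 yb + B zb)) \<bullet> (u - yb)) \<le> h2 u"
proof -
  from assms obtain gx gy where gx: "gx \<in> subdiff f2 xb" "gx + gf1 xb + A zb = 0"
    and gy: "gy \<in> subdiff h2 yb" "gy + gh1 yb + B zb = 0"
    and cc: "adjoint A xb + adjoint B yb = c"
    by (auto simp: Wstar_def)
  have "gx = - (gf1 xb + A zb)" using gx(2) by (subst eq_neg_iff_add_eq_0) (simp add: add.assoc)
  moreover have "gy = - (gh1 yb + B zb)" using gy(2) by (subst eq_neg_iff_add_eq_0) (simp add: add.assoc)
  ultimately show "f2 xb \<noteq> \<infinity>" "\<And>u. f2 xb + ereal ((- (gf1 xb + A zb)) \<bullet> (u - xb)) \<le> f2 u"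
    "h2 yb \<noteq> \<infinity>" "\<And>u. h2 yb + ereal ((- (gh1 yb + B zb)) \<bullet> (u - yb)) \<le> h2 u"
    using gx(1) gy(1) by (auto simp: subdiff_def)
  show "c = At xb + Bt yb" using cc by (simp add: At_def Bt_def)
qed

lemma part1:
  assumes kkt: "(xb, yb, zb) \<in> Wstar gf1 f2 gh1 h2 A B c"
    and lam: "0 \<le> lam" "lam \<le> 1" and k: "k \<ge> 1"
  shows "E lam xb yb zb k - E lam xb yb zb (k + 1) \<ge> delta lam k - xi k"
proof -
  note kf = kkt_facts[OF kkt]
  define n where "n = Suc k"
  have cdef: "c = At xb + Bt yb" by (rule kf(1))
  have M1: "(gf1 (xt n) - gf1 xb) \<bullet> (x n - xb) + (z n - zb) \<bullet> At (x n - xb) + Sx (x n - xt n) \<bullet> (x n - xb) \<le> 0"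
  proof -
    have "(sx n - (- (gf1 xb + A zb))) \<bullet> (x n - xb) \<ge> 0"
      using subgrad_mono[OF f2_props(2), of "x n" "sx n" xb] sub_x[of n] kf(2,3) by blast
    moreover have "sx n - (- (gf1 xb + A zb)) = - ((gf1 (xt n) - gf1 xb) + A (z n - zb) + Sx (x n - xt n))"
      by (simp add: sx_def linear_diff[OF linA] algebra_simps)
    ultimately have "(- ((gf1 (xt n) - gf1 xb) + A (z n - zb) + Sx (x n - xt n))) \<bullet> (x n - xb) \<ge> 0" by metis
    then show ?thesis by (simp only: inner_add_left inner_minus_left adjA; linarith)
  qed
  have M2: "(gh1 (yt k) - gh1 yb) \<bullet> (y k - yb) + (z k - zb + \<sigma> *\<^sub>R (At (x k - xb) + Bt (y k - yb))) \<bullet> Bt (y k - yb)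
       + Sy (y k - yt k) \<bullet> (y k - yb) \<le> 0"
  proof -
    have "(sy k - (- (gh1 yb + B zb))) \<bullet> (y k - yb) \<ge> 0"
      using subgrad_mono[OF h2_props(2), of "y k" "sy k" yb] sub_y[of k] kf(4,5) by blast
    moreover have "sy k - (- (gh1 yb + B zb)) = - ((gh1 (yt k) - gh1 yb) + B (z k - zb + \<sigma> *\<^sub>R (At (x k - xb) + Bt (y k - yb))) + Sy (y k - yt k))"
    proof -
      have arg: "z k + \<sigma> *\<^sub>R (At (x k) + Bt (y k) - c) = zb + (z k - zb + \<sigma> *\<^sub>R (At (x k - xb) + Bt (y k - yb)))"
        by (simp add: cdef linear_diff[OF linAt] linear_diff[OF linBt] algebra_simps)
      show ?thesis unfolding sy_def arg by (simp add: linear_add[OF linB] linear_diff[OF linB] algebra_simps)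
    qed
    ultimately have "(- ((gh1 (yt k) - gh1 yb) + B (z k - zb + \<sigma> *\<^sub>R (At (x k - xb) + Bt (y k - yb))) + Sy (y k - yt k))) \<bullet> (y k - yb) \<ge> 0" by metis
    then show ?thesis by (simp only: inner_add_left inner_minus_left adjB; linarith)
  qed
  have L1x: "(gf1 (xt n) - gf1 xb) \<bullet> (x n - xb) \<ge> (1/4) * qn SF (x n - xt n) - (1/2) * qn SFh (x n - xt n)"
    by (rule grad_L1[OF f1_bounds SF_psd])
  have L1y: "(gh1 (yt k) - gh1 yb) \<bullet> (y k - yb) \<ge> (1/4) * qn SH (y k - yt k) - (1/2) * qn SHh (y k - yt k)"
    by (rule grad_L1[OF h1_bounds SH_psd])
  have P1: "(1/\<rho>) * qn Sx (xt n - xb) - (1/\<rho>) * qn Sx (xt (Suc n) - xb)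
      = -2 * (Sx (x n - xt n) \<bullet> (x n - xb)) + (2 - \<rho>) * qn Sx (x n - xt n)"
  proof -
    have e: "xt (Suc n) - xb = (xt n - xb) + \<rho> *\<^sub>R (x n - xt n)" by (simp add: relax_x)
    have e2: "x n - xb = (xt n - xb) + (x n - xt n)" by simp
    have R: "(1/\<rho>) * qn Sx (xt n - xb) - (1/\<rho>) * qn Sx ((xt n - xb) + \<rho> *\<^sub>R (x n - xt n))
       = -2 * (Sx (x n - xt n) \<bullet> ((xt n - xb) + (x n - xt n))) + (2 - \<rho>) * qn Sx (x n - xt n)"
      by (rule relax_qn[OF Sx_psd rho(1)])
    show ?thesis unfolding e using R by (simp only: e2[symmetric])
  qed
  have P2: "(1/\<rho>) * qn Sy (yt k - yb) - (1/\<rho>) * qn Sy (yt (Suc k) - yb)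
      = -2 * (Sy (y k - yt k) \<bullet> (y k - yb)) + (2 - \<rho>) * qn Sy (y k - yt k)"
  proof -
    have e: "yt (Suc k) - yb = (yt k - yb) + \<rho> *\<^sub>R (y k - yt k)" by (simp add: relax_y)
    have e2: "y k - yb = (yt k - yb) + (y k - yt k)" by simp
    have R: "(1/\<rho>) * qn Sy (yt k - yb) - (1/\<rho>) * qn Sy ((yt k - yb) + \<rho> *\<^sub>R (y k - yt k))
       = -2 * (Sy (y k - yt k) \<bullet> ((yt k - yb) + (y k - yt k))) + (2 - \<rho>) * qn Sy (y k - yt k)"
      by (rule relax_qn[OF Sy_psd rho(1)])
    show ?thesis unfolding e using R by (simp only: e2[symmetric])
  qed
  define W where "W = z k - zb"
  define U0 where "U0 = At (x k - xb)"
  define U where "U = At (x n - xb)"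
  define V where "V = Bt (y k - yb)"
  have W1: "z n - zb = W + (\<sigma> * (\<rho> - 1)) *\<^sub>R U0 + \<sigma> *\<^sub>R U + (\<sigma> * \<rho>) *\<^sub>R V"
    unfolding n_def W_def U0_def U_def V_def by (rule z_rel[OF cdef])
  have P3: "(1 / (\<sigma> * \<rho>)) * (norm (W + (\<sigma> * (\<rho> - 1)) *\<^sub>R U0))\<^sup>2
       - (1 / (\<sigma> * \<rho>)) * (norm ((z n - zb) + (\<sigma> * (\<rho> - 1)) *\<^sub>R U))\<^sup>2
       + \<sigma> * (2 - \<rho>) * (norm U0)\<^sup>2 - \<sigma> * (2 - \<rho>) * (norm U)\<^sup>2
     = - 2 * ((z n - zb) \<bullet> U) - 2 * ((W + \<sigma> *\<^sub>R (U0 + V)) \<bullet> V) + \<sigma> * (2 - \<rho>) * (norm (U0 + V))\<^sup>2"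
    unfolding W1 by (rule zpart_identity[OF sigma_pos rho(1)])
  have Psi_diff: "Psi xb yb zb k - Psi xb yb zb n = 
       (1 / (\<sigma> * \<rho>)) * (norm (W + (\<sigma> * (\<rho> - 1)) *\<^sub>R U0))\<^sup>2
       - (1 / (\<sigma> * \<rho>)) * (norm ((z n - zb) + (\<sigma> * (\<rho> - 1)) *\<^sub>R U))\<^sup>2
       + \<sigma> * (2 - \<rho>) * (norm U0)\<^sup>2 - \<sigma> * (2 - \<rho>) * (norm U)\<^sup>2
       + ((1/\<rho>) * qn Sx (xt n - xb) - (1/\<rho>) * qn Sx (xt (Suc n) - xb))
       + ((1/\<rho>) * qn Sy (yt k - yb) - (1/\<rho>) * qn Sy (yt (Suc k) - yb))"
    unfolding Psi_def W_def U0_def U_def n_def Sx_def Sy_def by simp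
  have sym1: "qn Sx (x n - xt n) = qn Sx (xt n - x n)" by (rule qn_minus_commute[OF linSx])
  have sym2: "qn Sy (y k - yt k) = qn Sy (yt k - y k)" by (rule qn_minus_commute[OF linSy])
  have sym3: "qn SF (x n - xt n) = qn SF (xt n - x n)" by (rule qn_minus_commute[OF psd_linear[OF SF_psd]])
  have sym4: "qn SFh (x n - xt n) = qn SFh (xt n - x n)" by (rule qn_minus_commute[OF psd_linear[OF SFh_psd]])
  have sym5: "qn SH (y k - yt k) = qn SH (yt k - y k)" by (rule qn_minus_commute[OF psd_linear[OF SH_psd]])
  have sym6: "qn SHh (y k - yt k) = qn SHh (yt k - y k)" by (rule qn_minus_commute[OF psd_linear[OF SHh_psd]])
  have KEY: "Psi xb yb zb k - Psi xb yb zb n \<ge> (2 - \<rho>) * qn Sx (xt n - x n) + (2 - \<rho>) * qn Sy (yt k - y k)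
      + ((1/2) * qn SF (xt n - x n) - qn SFh (xt n - x n)) + ((1/2) * qn SH (yt k - y k) - qn SHh (yt k - y k))
      + \<sigma> * (2 - \<rho>) * (norm (U0 + V))\<^sup>2"
  proof -
    have X: "- 2 * ((z n - zb) \<bullet> U) - 2 * (Sx (x n - xt n) \<bullet> (x n - xb)) \<ge> (1/2) * qn SF (xt n - x n) - qn SFh (xt n - x n)"
      using M1 L1x sym3 sym4 unfolding U_def by linarith
    have Y: "- 2 * ((W + \<sigma> *\<^sub>R (U0 + V)) \<bullet> V) - 2 * (Sy (y k - yt k) \<bullet> (y k - yb)) \<ge> (1/2) * qn SH (yt k - y k) - qn SHh (yt k - y k)"
      using M2 L1y sym5 sym6 unfolding W_def U0_def V_def by linarith
    show ?thesis using Psi_diff P1[unfolded sym1] P2[unfolded sym2] P3 X Y by linarith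
  qed
  define D where "D = x n - x k"
  define e0 where "e0 = x k - xt k"
  define R where "R = U0 + V"
  have AtD: "At D = U - U0" unfolding D_def U_def U0_def by (simp add: linear_diff[OF linAt])
  have zdiff: "z n - z k = \<sigma> *\<^sub>R At D + (\<sigma> * \<rho>) *\<^sub>R R"
  proof -
    have "z n - z k = (z n - zb) - W" by (simp add: W_def)
    also have "\<dots> = (\<sigma> * (\<rho> - 1)) *\<^sub>R U0 + \<sigma> *\<^sub>R U + (\<sigma> * \<rho>) *\<^sub>R V" unfolding W1 by simp
    also have "\<dots> = \<sigma> *\<^sub>R (U - U0) + (\<sigma> * \<rho>) *\<^sub>R (U0 + V)" by (simp add: algebra_simps)
    finally show ?thesis by (simp add: AtD R_def)
  qed
  have ediff: "(x n - xt n) - (x k - xt k) = D - \<rho> *\<^sub>R e0"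
    unfolding D_def e0_def n_def by (simp add: relax_x algebra_simps)
  have M3: "(gf1 (xt n) - gf1 (xt k)) \<bullet> D + (z n - z k) \<bullet> At D + Sx (D - \<rho> *\<^sub>R e0) \<bullet> D \<le> 0"
  proof -
    have "(sx n - sx k) \<bullet> (x n - x k) \<ge> 0"
      using subgrad_mono[OF f2_props(2), of "x n" "sx n" "x k" "sx k"] sub_x[of n] sub_x[of k] by blast
    moreover have "sx n - sx k = - ((gf1 (xt n) - gf1 (xt k)) + A (z n - z k) + Sx ((x n - xt n) - (x k - xt k)))"
    proof -
      have e1: "Sx ((x n - xt n) - (x k - xt k)) = Sx (x n - xt n) - Sx (x k - xt k)" by (rule linear_diff[OF linSx])
      have e2: "A (z n - z k) = A (z n) - A (z k)" by (rule linear_diff[OF linA])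
      show ?thesis unfolding sx_def e1 e2 by (simp add: algebra_simps)
    qed
    ultimately have "(- ((gf1 (xt n) - gf1 (xt k)) + A (z n - z k) + Sx (D - \<rho> *\<^sub>R e0))) \<bullet> D \<ge> 0"
      unfolding ediff D_def by metis
    then show ?thesis by (simp only: inner_add_left inner_minus_left adjA; linarith)
  qed
  have L2: "(gf1 (xt n) - gf1 (xt k)) \<bullet> (\<rho> *\<^sub>R D) \<ge> - (1/4) * qn SFh (xt n - xt k - \<rho> *\<^sub>R D)"
    by (rule grad_L2[OF f1_bounds SF_psd SFh_psd])
  have xtd: "xt n - xt k - \<rho> *\<^sub>R D = \<rho> *\<^sub>R (e0 - D)"
    unfolding n_def e0_def by (simp add: relax_x algebra_simps)
  define gD where "gD = (gf1 (xt n) - gf1 (xt k)) \<bullet> D"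
  define \<alpha> where "\<alpha> = qn Sx e0"
  define \<beta> where "\<beta> = qn Sx D"
  define \<gamma> where "\<gamma> = Sx e0 \<bullet> D"
  define Q where "Q = (norm (At D))\<^sup>2"
  define P where "P = R \<bullet> At D"
  define RR where "RR = (norm R)\<^sup>2"
  have Z: "qn Sx (e0 - D) = \<alpha> - 2 * \<gamma> + \<beta>" unfolding \<alpha>_def \<beta>_def \<gamma>_def by (rule qn_diff[OF Sx_psd])
  have Z0: "qn Sx (e0 - D) \<ge> 0" by (rule psd_nonneg[OF Sx_psd])
  have l2: "\<rho> * gD \<ge> - (1/4) * \<rho>^2 * qn Sx (e0 - D)"
  proof -
    have "qn SFh (\<rho> *\<^sub>R (e0 - D)) = \<rho>^2 * qn SFh (e0 - D)" by (rule qn_scale[OF psd_linear[OF SFh_psd]])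
    moreover have "qn SFh (e0 - D) \<le> qn Sx (e0 - D)" by (rule qnSx_ge)
    moreover have "(gf1 (xt n) - gf1 (xt k)) \<bullet> (\<rho> *\<^sub>R D) = \<rho> * gD" by (simp add: gD_def)
    moreover have "\<rho>^2 * qn SFh (e0 - D) \<le> \<rho>^2 * qn Sx (e0 - D)"
      by (rule mult_left_mono[OF qnSx_ge]) simp
    ultimately show ?thesis using L2 unfolding xtd by linarith
  qed
  have gD_lb: "gD \<ge> - (\<rho> / 4) * qn Sx (e0 - D)"
  proof -
    have "\<rho> * (gD + (\<rho> / 4) * qn Sx (e0 - D)) \<ge> 0" using l2 by (simp add: algebra_simps power2_eq_square)
    then have "gD + (\<rho> / 4) * qn Sx (e0 - D) \<ge> 0" using rho(1) by (simp add: zero_le_mult_iff)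
    then show ?thesis by simp
  qed
  have m3: "gD + \<sigma> * Q + \<sigma> * \<rho> * P + \<beta> - \<rho> * \<gamma> \<le> 0"
  proof -
    have "(z n - z k) \<bullet> At D = \<sigma> * Q + \<sigma> * \<rho> * P"
      unfolding zdiff Q_def P_def by (simp add: inner_add_left power2_norm_eq_inner)
    moreover have "Sx (D - \<rho> *\<^sub>R e0) \<bullet> D = \<beta> - \<rho> * \<gamma>"
      unfolding \<beta>_def \<gamma>_def qn_def by (simp add: linear_diff[OF linSx] linear_scale[OF linSx] inner_diff_left inner_diff_right inner_commute)
    ultimately show ?thesis using M3 unfolding gD_def by linarith
  qed
  have rN: "\<rho> * (\<alpha> + \<sigma> * RR - \<sigma> * (RR + 2 * P + Q)) - (2 - \<rho>) * (\<beta> + \<sigma> * Q) \<ge> 0"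
  proof -
    have "\<rho> * (\<alpha> + \<sigma> * RR - \<sigma> * (RR + 2 * P + Q)) - (2 - \<rho>) * (\<beta> + \<sigma> * Q)
        = \<rho> * \<alpha> - 2 * (\<sigma> * \<rho> * P) - 2 * (\<sigma> * Q) - 2 * \<beta> + \<rho> * \<beta>" by (simp add: algebra_simps)
    moreover have "\<rho> * (\<alpha> - 2 * \<gamma> + \<beta>) \<ge> 0" using rho(1) Z0 Z by simp
    moreover have "\<rho> * (\<alpha> - 2 * \<gamma> + \<beta>) = \<rho> * \<alpha> - 2 * (\<rho> * \<gamma>) + \<rho> * \<beta>" by (simp add: algebra_simps)
    moreover have "(\<rho> / 4) * qn Sx (e0 - D) = (\<rho> * (\<alpha> - 2 * \<gamma> + \<beta>)) / 4" using Z by simp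
    ultimately show ?thesis using m3 gD_lb by linarith
  qed
  have MM: "At (x n) + Bt (y k) - c = R + At D"
    unfolding R_def U0_def V_def D_def cdef by (simp add: linear_diff[OF linAt] linear_diff[OF linBt] algebra_simps)
  have MMn: "(norm (At (x n) + Bt (y k) - c))\<^sup>2 = RR + 2 * P + Q"
    unfolding MM RR_def P_def Q_def by (simp add: power2_norm_eq_inner inner_add_left inner_add_right inner_commute)
  have qFD: "qn F (x n - x k) = \<beta> + \<sigma> * Q" unfolding \<beta>_def Q_def D_def by (rule qnF)
  have Nnn: "\<alpha> + \<sigma> * RR - \<sigma> * (RR + 2 * P + Q) - (2 - \<rho>) / \<rho> * (\<beta> + \<sigma> * Q) \<ge> 0"
  proof -
    have "\<rho> * (\<alpha> + \<sigma> * RR - \<sigma> * (RR + 2 * P + Q) - (2 - \<rho>) / \<rho> * (\<beta> + \<sigma> * Q))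
        = \<rho> * (\<alpha> + \<sigma> * RR - \<sigma> * (RR + 2 * P + Q)) - (2 - \<rho>) * (\<beta> + \<sigma> * Q)"
      using rho(1) by (simp add: field_simps)
    then have "\<rho> * (\<alpha> + \<sigma> * RR - \<sigma> * (RR + 2 * P + Q) - (2 - \<rho>) / \<rho> * (\<beta> + \<sigma> * Q)) \<ge> 0" using rN by simp
    then show ?thesis using rho(1) by (simp add: zero_le_mult_iff)
  qed
  have al: "\<alpha> = qn (opadd SFh S) (xt k - x k)" unfolding \<alpha>_def e0_def Sx_def[symmetric] by (rule qn_minus_commute[OF linSx])
  have NX: "0 \<le> lam * ((2-\<rho>)*\<alpha> + \<sigma>*(2-\<rho>)*RR - \<sigma>*(2-\<rho>)*(norm (At (x n) + Bt (y k) - c))\<^sup>2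
              - ((2 - \<rho>)\<^sup>2 / \<rho>) * qn F (x n - x k))"
  proof -
    have "(2-\<rho>)*\<alpha> + \<sigma>*(2-\<rho>)*RR - \<sigma>*(2-\<rho>)*(RR + 2 * P + Q) - ((2 - \<rho>)\<^sup>2 / \<rho>) * (\<beta> + \<sigma> * Q)
       = (2 - \<rho>) * (\<alpha> + \<sigma> * RR - \<sigma> * (RR + 2 * P + Q) - (2 - \<rho>) / \<rho> * (\<beta> + \<sigma> * Q))"
      by (simp add: algebra_simps power2_eq_square)
    moreover have "(2 - \<rho>) * (\<alpha> + \<sigma> * RR - \<sigma> * (RR + 2 * P + Q) - (2 - \<rho>) / \<rho> * (\<beta> + \<sigma> * Q)) \<ge> 0"
      using Nnn rho(2) by simp
    ultimately show ?thesis using lam(1) unfolding MMn qFD by simp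
  qed
  have NY0: "RR + (norm (At (x k) + Bt (y (k - 1)) - c))\<^sup>2 - (1/2) * (norm (Bt (y k - y (k - 1))))\<^sup>2 \<ge> 0"
  proof -
    have "R - (At (x k) + Bt (y (k - 1)) - c) = Bt (y k - y (k - 1))"
      unfolding R_def U0_def V_def cdef by (simp add: linear_diff[OF linAt] linear_diff[OF linBt] algebra_simps)
    then show ?thesis using norm_pair_ge[of R "At (x k) + Bt (y (k - 1)) - c"] unfolding RR_def by simp
  qed
  have NY: "0 \<le> (1-lam)*(\<sigma>*(2-\<rho>)) * (RR + (norm (At (x k) + Bt (y (k - 1)) - c))\<^sup>2 - (1/2) * (norm (Bt (y k - y (k - 1))))\<^sup>2)"
    using NY0 lam(2) sigma_pos rho(2) by simp
  have KEY': "Psi xb yb zb k - Psi xb yb zb n \<ge> (2 - \<rho>) * qn Sx (xt n - x n) + (2 - \<rho>) * qn Sy (yt k - y k)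
      + ((1/2) * qn SF (xt n - x n) - qn SFh (xt n - x n)) + ((1/2) * qn SH (yt k - y k) - qn SHh (yt k - y k))
      + \<sigma> * (2 - \<rho>) * RR" using KEY unfolding RR_def R_def .
  have q1: "qn (\<lambda>u. (1/2) *\<^sub>R SF u) w = (1/2) * qn SF w" for w by (simp add: qn_def)
  have q2: "qn (\<lambda>v. (1/2) *\<^sub>R SH v + (2 - \<rho>) *\<^sub>R (SHh v + T v)) w = (1/2) * qn SH w + (2 - \<rho>) * qn Sy w" for w
    by (simp add: qn_def Sy_def opadd_def inner_add_right)
  have fa: "Psi xb yb zb k - Psi xb yb zb n + (2-\<rho>)*\<alpha> + \<sigma>*(1-lam)*(2-\<rho>)*(norm (At (x k) + Bt (y (k - 1)) - c))\<^sup>2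
       - ((2-\<rho>)*qn Sx (xt n - x n) + \<sigma>*(1-lam)*(2-\<rho>)*(norm (At (x n) + Bt (y k) - c))\<^sup>2)
     \<ge> ((1/2)*qn SF (xt n - x n) + ((1/2)*qn SH (yt k - y k) + (2-\<rho>)*qn Sy (yt k - y k)) + (1-lam)*(2-\<rho>)*\<alpha>
        + \<sigma>*(2*lam-1)*(2-\<rho>)*(norm (At (x n) + Bt (y k) - c))\<^sup>2
        + (\<sigma>*(1-lam)*(2-\<rho>)/2)*(norm (Bt (y k - y (k - 1))))\<^sup>2 + (lam*((2 - \<rho>)\<^sup>2 / \<rho>))*qn F (x n - x k))
        - (qn SFh (xt n - x n) + qn SHh (yt k - y k))"
    by (rule final_arith[OF KEY' NX NY])
  show ?thesis
  proof -
    have Ek: "E lam xb yb zb k = Psi xb yb zb k + (2-\<rho>)*\<alpha> + \<sigma>*(1-lam)*(2-\<rho>)*(norm (At (x k) + Bt (y (k - 1)) - c))\<^sup>2"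
      unfolding E_def al by simp
    have En: "E lam xb yb zb (k + 1) = Psi xb yb zb n + (2-\<rho>)*qn Sx (xt n - x n) + \<sigma>*(1-lam)*(2-\<rho>)*(norm (At (x n) + Bt (y k) - c))\<^sup>2"
      unfolding E_def n_def Sx_def by simp
    have dk: "delta lam k = (1/2)*qn SF (xt n - x n) + ((1/2)*qn SH (yt k - y k) + (2-\<rho>)*qn Sy (yt k - y k)) + (1-lam)*(2-\<rho>)*\<alpha>
        + \<sigma>*(2*lam-1)*(2-\<rho>)*(norm (At (x n) + Bt (y k) - c))\<^sup>2
        + (\<sigma>*(1-lam)*(2-\<rho>)/2)*(norm (Bt (y k - y (k - 1))))\<^sup>2 + (lam*(2 - \<rho>)\<^sup>2 / \<rho>)*qn F (x n - x k)"
      unfolding delta_def q1 q2 al n_def Sx_def by simp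
    have xk: "xi k = qn SFh (xt n - x n) + qn SHh (yt k - y k)" unfolding xi_def n_def by simp
    have kap: "(lam*(2 - \<rho>)\<^sup>2 / \<rho>)*qn F (x n - x k) = (lam*((2 - \<rho>)\<^sup>2 / \<rho>))*qn F (x n - x k)" by simp
    show ?thesis using fa Ek En dk xk kap by linarith
  qed
qed

end

lemma qn_continuous: fixes G :: "'a::euclidean_space \<Rightarrow> 'a"
  assumes "linear G" shows "continuous_on S (qn G)"
proof -
  have "continuous_on S G" using assms by (simp add: linear_conv_bounded_linear linear_continuous_on)
  then show ?thesis unfolding qn_def[abs_def] by (intro continuous_intros)
qed

lemma qn_tendsto: fixes G :: "'a::euclidean_space \<Rightarrow> 'a"
  assumes "linear G" and "(f \<longlongrightarrow> l) F" shows "((\<lambda>k. qn G (f k)) \<longlongrightarrow> qn G l) F"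
proof -
  have bl: "bounded_linear G" using assms(1) by (simp add: linear_conv_bounded_linear)
  have "((\<lambda>k. G (f k)) \<longlongrightarrow> G l) F" by (rule bounded_linear.tendsto[OF bl assms(2)])
  then show ?thesis unfolding qn_def using assms(2) by (intro tendsto_inner)
qed

lemma lin_tendsto: fixes G :: "'a::euclidean_space \<Rightarrow> 'b::real_normed_vector"
  assumes "linear G" and "(f \<longlongrightarrow> l) F" shows "((\<lambda>k. G (f k)) \<longlongrightarrow> G l) F"
  using assms by (simp add: linear_conv_bounded_linear bounded_linear.tendsto)

lemma pd_lower: fixes G :: "'a::euclidean_space \<Rightarrow> 'a"
  assumes "pd_op G" shows "\<exists>\<mu>>0. \<forall>u. \<mu> * (norm u)\<^sup>2 \<le> qn G u"
proof -
  have lin: "linear G" using assms by (simp add: pd_op_def psd_op_def)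
  obtain u0 where u0: "u0 \<in> sphere 0 1" and mn: "\<forall>v\<in>sphere 0 1. qn G u0 \<le> qn G v"
    using continuous_attains_inf[OF compact_sphere _ qn_continuous[OF lin], of 0 1] by auto
  have "u0 \<noteq> 0" using u0 by auto
  then have pos: "qn G u0 > 0" using assms by (simp add: pd_op_def qn_def)
  have "qn G u0 * (norm u)\<^sup>2 \<le> qn G u" for u
  proof (cases "u = 0")
    case True then show ?thesis by (simp add: qn_def linear_0[OF lin])
  next
    case False
    define v where "v = (1 / norm u) *\<^sub>R u"
    have "v \<in> sphere 0 1" using False by (simp add: v_def)
    then have "qn G u0 \<le> qn G v" using mn by blast
    moreover have "qn G v = (1 / norm u)^2 * qn G u" unfolding v_def by (rule qn_scale[OF lin])
    ultimately have "qn G u0 \<le> (1 / norm u)^2 * qn G u" by simp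
    then have "qn G u0 * (norm u)^2 \<le> (1 / norm u)^2 * qn G u * (norm u)^2"
      by (simp add: mult_right_mono)
    also have "\<dots> = qn G u" using False by (simp add: field_simps)
    finally show ?thesis .
  qed
  with pos show ?thesis by blast
qed

lemma pd_qn_to_zero: fixes G :: "'a::euclidean_space \<Rightarrow> 'a"
  assumes "pd_op G" and "((\<lambda>k. qn G (f k)) \<longlongrightarrow> 0) F" shows "(f \<longlongrightarrow> 0) F"
proof -
  obtain \<mu> where mu: "\<mu> > 0" "\<And>u. \<mu> * (norm u)\<^sup>2 \<le> qn G u" using pd_lower[OF assms(1)] by blast
  have "((\<lambda>k. (1/\<mu>) * qn G (f k)) \<longlongrightarrow> (1/\<mu>) * 0) F" by (intro tendsto_intros assms(2))
  then have t: "((\<lambda>k. (1/\<mu>) * qn G (f k)) \<longlongrightarrow> 0) F" by simp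
  have "((\<lambda>k. (norm (f k))\<^sup>2) \<longlongrightarrow> 0) F"
  proof (rule tendsto_sandwich[OF _ _ tendsto_const t])
    show "\<forall>\<^sub>F k in F. 0 \<le> (norm (f k))\<^sup>2" by simp
    show "\<forall>\<^sub>F k in F. (norm (f k))\<^sup>2 \<le> (1/\<mu>) * qn G (f k)"
      using mu by (intro always_eventually allI) (simp add: field_simps mult.commute)
  qed
  then have "((\<lambda>k. sqrt ((norm (f k))\<^sup>2)) \<longlongrightarrow> sqrt 0) F" by (intro tendsto_intros)
  then have "((\<lambda>k. norm (f k)) \<longlongrightarrow> 0) F" by simp
  then show ?thesis by (simp add: tendsto_norm_zero_iff)
qed

lemma psd_qn_to_zero_nonneg_sum:
  fixes a b :: "'a \<Rightarrow> real"
  assumes "\<And>k. 0 \<le> a k" "\<And>k. 0 \<le> b k" "((\<lambda>k. a k + b k) \<longlongrightarrow> 0) F"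
  shows "(a \<longlongrightarrow> 0) F"
  by (rule tendsto_sandwich[where f="\<lambda>_. 0" and h="\<lambda>k. a k + b k"]) (use assms in \<open>auto intro: always_eventually\<close>)

lemma fejer_bound:
  fixes a d e :: "nat \<Rightarrow> real"
  assumes step: "\<And>k. k \<ge> K \<Longrightarrow> a (Suc k) \<le> a k - d k + e k"
  shows "n \<ge> K \<Longrightarrow> a n + (\<Sum>j\<in>{K..<n}. d j) \<le> a K + (\<Sum>j\<in>{K..<n}. e j)"
proof (induction n)
  case 0 then show ?case by simp
next
  case (Suc n)
  show ?case
  proof (cases "Suc n = K")
    case True then show ?thesis by simp
  next
    case False
    then have "n \<ge> K" using Suc.prems by simp
    then show ?thesis using Suc.IH step[of n] by (simp add: sum.atLeastLessThan_Suc)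
  qed
qed

lemma fejer:
  fixes a d e :: "nat \<Rightarrow> real"
  assumes step: "\<And>k. k \<ge> K \<Longrightarrow> a (Suc k) \<le> a k - d k + e k"
    and a0: "\<And>k. 0 \<le> a k" and d0: "\<And>k. 0 \<le> d k" and e0: "\<And>k. 0 \<le> e k" and se: "summable e"
  shows "\<forall>n\<ge>K. a n \<le> a K + suminf e" and "d \<longlonglongrightarrow> 0" and "convergent a"
proof -
  have sle: "(\<Sum>j\<in>{K..<n}. e j) \<le> suminf e" for n
    using sum_le_suminf[OF se, of "{K..<n}"] e0 by auto
  show bnd: "\<forall>n\<ge>K. a n \<le> a K + suminf e"
  proof (intro allI impI)
    fix n assume "K \<le> n"
    have "0 \<le> (\<Sum>j\<in>{K..<n}. d j)" using d0 by (simp add: sum_nonneg)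
    then show "a n \<le> a K + suminf e" using fejer_bound[where K=K and a=a and d=d and e=e, OF step \<open>K \<le> n\<close>] sle[of n] by linarith
  qed
  have sd: "summable (\<lambda>j. d (j + K))"
  proof (rule summableI_nonneg_bounded[where x = "a K + suminf e"])
    show "0 \<le> d (n + K)" for n by (rule d0)
    fix n
    have "(\<Sum>i<n. d (i + K)) = (\<Sum>j\<in>{K..<n + K}. d j)"
      using sum.shift_bounds_nat_ivl[of d 0 K n] by (simp add: lessThan_atLeast0 add.commute)
    moreover have "a (n + K) + (\<Sum>j\<in>{K..<n + K}. d j) \<le> a K + (\<Sum>j\<in>{K..<n + K}. e j)"
      using fejer_bound[where K=K and a=a and d=d and e=e, OF step, of "n + K"] by simp
    ultimately show "(\<Sum>i<n. d (i + K)) \<le> a K + suminf e" using sle[of "n + K"] a0[of "n + K"] by linarith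
  qed
  show "d \<longlonglongrightarrow> 0" using summable_LIMSEQ_zero[OF sd] by (rule LIMSEQ_offset)
  define T where "T n = suminf e - (\<Sum>j<n. e j)" for n
  have T0: "T n \<ge> 0" for n using sum_le_suminf[OF se, of "{..<n}"] e0 by (auto simp: T_def)
  have Tlim: "T \<longlonglongrightarrow> 0"
  proof -
    have "(\<lambda>n. \<Sum>j<n. e j) \<longlonglongrightarrow> suminf e" by (rule summable_LIMSEQ[OF se])
    then have "(\<lambda>n. suminf e - (\<Sum>j<n. e j)) \<longlonglongrightarrow> suminf e - suminf e" by (intro tendsto_intros)
    then show ?thesis by (simp add: T_def[abs_def])
  qed
  define C where "C n = a (n + K) + T (n + K)" for n
  have "decseq C"
  proof (rule decseq_SucI)
    fix n
    have "a (Suc (n + K)) \<le> a (n + K) - d (n + K) + e (n + K)" by (rule step) simp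
    moreover have "T (Suc (n + K)) = T (n + K) - e (n + K)" by (simp add: T_def)
    ultimately show "C (Suc n) \<le> C n" using d0[of "n + K"] by (simp add: C_def)
  qed
  moreover have "\<forall>i. 0 \<le> C i" using a0 T0 by (simp add: C_def add_nonneg_nonneg)
  ultimately obtain L where L: "C \<longlonglongrightarrow> L" using decseq_convergent by blast
  have "(\<lambda>n. C n - T (n + K)) \<longlonglongrightarrow> L - 0"
    by (intro tendsto_intros L LIMSEQ_ignore_initial_segment[OF Tlim])
  then have "(\<lambda>n. a (n + K)) \<longlonglongrightarrow> L" by (simp add: C_def)
  then have "a \<longlonglongrightarrow> L" by (rule LIMSEQ_offset)
  then show "convergent a" by (auto simp: convergent_def)
qed

lemma contraction_to_zero:
  fixes a b :: "nat \<Rightarrow> real"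
  assumes rec: "\<And>k. a (Suc k) \<le> q * a k + b k" and q: "0 \<le> q" "q < 1"
    and a0: "\<And>k. 0 \<le> a k" and b: "b \<longlonglongrightarrow> 0"
  shows "a \<longlonglongrightarrow> 0"
proof (rule LIMSEQ_I)
  fix r :: real assume r: "r > 0"
  define \<epsilon> where "\<epsilon> = r * (1 - q) / 2"
  have eps: "\<epsilon> > 0" using r q by (simp add: \<epsilon>_def)
  obtain N where N: "\<And>k. k \<ge> N \<Longrightarrow> norm (b k) < \<epsilon>" using LIMSEQ_D[OF b eps] by auto
  have ind: "a (N + m) \<le> q ^ m * a N + \<epsilon> / (1 - q)" for m
  proof (induction m)
    case 0 then show ?case using eps q by simp
  next
    case (Suc m)
    have "a (N + Suc m) \<le> q * a (N + m) + b (N + m)" using rec[of "N + m"] by simp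
    also have "\<dots> \<le> q * (q ^ m * a N + \<epsilon> / (1 - q)) + \<epsilon>"
      using Suc.IH q N[of "N + m"] by (intro add_mono mult_left_mono) auto
    also have "\<dots> = q ^ Suc m * a N + \<epsilon> / (1 - q)" using q by (simp add: field_simps)
    finally show ?case .
  qed
  have "(\<lambda>m. q ^ m * a N) \<longlonglongrightarrow> 0 * a N" using q by (intro tendsto_intros) simp
  then obtain M where M: "\<And>m. m \<ge> M \<Longrightarrow> norm (q ^ m * a N) < r / 2"
    using LIMSEQ_D[of _ 0 "r/2"] r by fastforce
  have "1 - q \<noteq> 0" using q by auto
  moreover have "\<epsilon> = (r / 2) * (1 - q)" by (simp add: \<epsilon>_def)
  ultimately have "\<epsilon> / (1 - q) = r / 2" by simp
  show "\<exists>no. \<forall>n\<ge>no. norm (a n - 0) < r"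
  proof (intro exI allI impI)
    fix n assume n: "n \<ge> N + M"
    define m where "m = n - N"
    have m: "n = N + m" "m \<ge> M" using n by (auto simp: m_def)
    have "q ^ m * a N < r / 2" using M[OF m(2)] by simp
    then have "a n < r" using ind[of m] \<open>\<epsilon> / (1 - q) = r / 2\<close> m(1) by simp
    then show "norm (a n - 0) < r" using a0[of n] by simp
  qed
qed


lemma tendsto_sq_norm_zero:
  fixes f :: "nat \<Rightarrow> 'a::real_normed_vector"
  assumes "(\<lambda>k. (norm (f k))\<^sup>2) \<longlonglongrightarrow> 0" shows "f \<longlonglongrightarrow> 0"
proof -
  have "(\<lambda>k. sqrt ((norm (f k))\<^sup>2)) \<longlonglongrightarrow> sqrt 0" using assms by (intro tendsto_intros)
  then show ?thesis by (simp add: tendsto_norm_zero_iff)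
qed

lemma tendsto_const_mult_zero:
  fixes g :: "nat \<Rightarrow> real"
  assumes "c > 0" "(\<lambda>k. c * g k) \<longlonglongrightarrow> 0" shows "g \<longlonglongrightarrow> 0"
proof -
  have "(\<lambda>k. (1/c) * (c * g k)) \<longlonglongrightarrow> (1/c) * 0" using assms(2) by (intro tendsto_intros)
  then show ?thesis using assms(1) by simp
qed

lemma tendsto_zero_sandwich:
  fixes g h :: "nat \<Rightarrow> real"
  assumes "\<And>k. 0 \<le> g k" "\<And>k. g k \<le> h k" "h \<longlonglongrightarrow> 0" shows "g \<longlonglongrightarrow> 0"
  by (rule tendsto_sandwich[where f="\<lambda>_. 0" and h=h]) (use assms in \<open>auto intro: always_eventually\<close>)

lemma tendsto_zero_sandwich_ev:
  fixes g h :: "nat \<Rightarrow> real"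
  assumes "\<And>k. k \<ge> K \<Longrightarrow> 0 \<le> g k" "\<And>k. k \<ge> K \<Longrightarrow> g k \<le> h k" "h \<longlonglongrightarrow> 0" shows "g \<longlonglongrightarrow> 0"
  by (rule tendsto_sandwich[where f="\<lambda>_. 0" and h=h]) (use assms in \<open>auto simp: eventually_sequentially\<close>)

lemma lipschitz_tendsto:
  fixes g :: "'a::real_normed_vector \<Rightarrow> 'b::real_normed_vector"
  assumes L: "\<exists>L. \<forall>u v. norm (g u - g v) \<le> L * norm (u - v)" and f: "f \<longlonglongrightarrow> l"
  shows "(\<lambda>k. g (f k)) \<longlonglongrightarrow> g l"
proof -
  obtain L where L: "\<And>u v. norm (g u - g v) \<le> L * norm (u - v)" using L by blast
  have "(\<lambda>k. f k - l) \<longlonglongrightarrow> 0" using f by (rule LIM_zero)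
  then have "(\<lambda>k. norm (f k - l)) \<longlonglongrightarrow> 0" by (rule tendsto_norm_zero)
  then have "(\<lambda>k. L * norm (f k - l)) \<longlonglongrightarrow> L * 0" by (rule tendsto_mult_left)
  then have h: "(\<lambda>k. L * norm (f k - l)) \<longlonglongrightarrow> 0" by simp
  have "(\<lambda>k. norm (g (f k) - g l)) \<longlonglongrightarrow> 0"
    by (rule tendsto_zero_sandwich[OF _ _ h]) (simp_all add: L)
  then have "(\<lambda>k. g (f k) - g l) \<longlonglongrightarrow> 0" by (rule tendsto_norm_zero_cancel)
  then show ?thesis by (rule LIM_zero_cancel)
qed

lemma qn_sum_le: assumes "psd_op G" shows "qn G (u + v) \<le> 2 * qn G u + 2 * qn G v"
proof -
  have "qn G (u - v) \<ge> 0" by (rule psd_nonneg[OF assms])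
  then show ?thesis using qn_add[OF assms, of u v] qn_diff[OF assms, of u v] by simp
qed

lemma lsc_pass:
  assumes cl: "closed_fun f" and pf: "proper_fun f"
    and xl: "xs \<longlonglongrightarrow> x0" and al: "a \<longlonglongrightarrow> a0" and bl: "b \<longlonglongrightarrow> b0"
    and ineq: "\<And>j. f (xs j) + ereal (a j) \<le> f u + ereal (b j)"
  shows "f x0 + ereal a0 \<le> f u + ereal b0"
proof (cases "f u = \<infinity>")
  case True then show ?thesis by simp
next
  case False
  moreover have "f u \<noteq> -\<infinity>" using pf by (simp add: proper_fun_def)
  ultimately obtain m where m: "f u = ereal m" by (cases "f u") auto
  let ?E = "{(x, t::real). f x \<le> ereal t}"
  have mem: "(xs j, m + b j - a j) \<in> ?E" for j
  proof -
    have ne: "f (xs j) \<noteq> -\<infinity>" using pf by (simp add: proper_fun_def)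
    have le: "f (xs j) + ereal (a j) \<le> ereal (m + b j)" using ineq[of j] m by simp
    then have "f (xs j) \<noteq> \<infinity>" by auto
    with ne obtain v where v: "f (xs j) = ereal v" by (cases "f (xs j)") auto
    with le have "v \<le> m + b j - a j" by simp
    then have "f (xs j) \<le> ereal (m + b j - a j)" using v by simp
    then show ?thesis by simp
  qed
  have "(\<lambda>j. (xs j, m + b j - a j)) \<longlonglongrightarrow> (x0, m + b0 - a0)"
    by (intro tendsto_intros xl al bl)
  then have "(x0, m + b0 - a0) \<in> ?E"
    by (rule closed_sequentially[OF cl[unfolded closed_fun_def] mem])
  then have "f x0 \<le> ereal (m + b0 - a0)" by simp
  moreover have "f x0 \<noteq> -\<infinity>" using pf by (simp add: proper_fun_def)
  ultimately obtain v where v: "f x0 = ereal v" "v \<le> m + b0 - a0" by (cases "f x0") auto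
  then show ?thesis using m by simp
qed


context gadmm begin

lemma linF: "linear F" by (rule psd_linear[OF F_psd])
lemma linH: "linear H" by (rule psd_linear[OF H_psd])

lemma limit_in_W:
  assumes s: "strict_mono s"
    and xs: "(\<lambda>j. x (s j)) \<longlonglongrightarrow> x0" and ys: "(\<lambda>j. y (s j)) \<longlonglongrightarrow> y0" and zs: "(\<lambda>j. z (s j)) \<longlonglongrightarrow> z0"
    and ex: "(\<lambda>k. x k - xt k) \<longlonglongrightarrow> 0" and ey: "(\<lambda>k. y k - yt k) \<longlonglongrightarrow> 0" and ez: "(\<lambda>k. z k - zt k) \<longlonglongrightarrow> 0"
    and res: "(\<lambda>k. At (x k) + Bt (y k) - c) \<longlonglongrightarrow> 0"
    and glip: "\<exists>L. \<forall>u v. norm (gf1 u - gf1 v) \<le> L * norm (u - v)"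
    and hlip: "\<exists>L. \<forall>u v. norm (gh1 u - gh1 v) \<le> L * norm (u - v)"
  shows "(x0, y0, z0) \<in> Wstar gf1 f2 gh1 h2 A B c"
proof -
  have sub: "(\<lambda>j. f (s j)) \<longlonglongrightarrow> l" if "f \<longlonglongrightarrow> l" for f :: "nat \<Rightarrow> 'w::topological_space" and l
    using LIMSEQ_subseq_LIMSEQ[OF that s] by (simp add: o_def)
  have xts: "(\<lambda>j. xt (s j)) \<longlonglongrightarrow> x0"
  proof -
    have "(\<lambda>j. x (s j) - (x (s j) - xt (s j))) \<longlonglongrightarrow> x0 - 0" by (intro tendsto_intros xs sub[OF ex])
    then show ?thesis by simp
  qed
  have yts: "(\<lambda>j. yt (s j)) \<longlonglongrightarrow> y0"
  proof -
    have "(\<lambda>j. y (s j) - (y (s j) - yt (s j))) \<longlonglongrightarrow> y0 - 0" by (intro tendsto_intros ys sub[OF ey])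
    then show ?thesis by simp
  qed
  have zts: "(\<lambda>j. zt (s j)) \<longlonglongrightarrow> z0"
  proof -
    have "(\<lambda>j. z (s j) - (z (s j) - zt (s j))) \<longlonglongrightarrow> z0 - 0" by (intro tendsto_intros zs sub[OF ez])
    then show ?thesis by simp
  qed
  have r0: "At x0 + Bt y0 - c = 0"
  proof -
    have "(\<lambda>j. At (x (s j)) + Bt (y (s j)) - c) \<longlonglongrightarrow> At x0 + Bt y0 - c"
      by (intro tendsto_intros lin_tendsto[OF linAt xs] lin_tendsto[OF linBt ys])
    moreover have "(\<lambda>j. At (x (s j)) + Bt (y (s j)) - c) \<longlonglongrightarrow> 0" by (rule sub[OF res])
    ultimately show ?thesis by (rule LIMSEQ_unique)
  qed
  have sig0: "\<sigma> \<noteq> 0" using sigma_pos by simp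
  define gx where "gx k = gf1 (xt k) + \<sigma> *\<^sub>R A (At (xt k) + Bt (yt k) - c + (1 / \<sigma>) *\<^sub>R zt k) - F (xt k)" for k
  define g0 where "g0 = gf1 x0 + \<sigma> *\<^sub>R A (At x0 + Bt y0 - c + (1 / \<sigma>) *\<^sub>R z0) - F x0"
  have gxl: "(\<lambda>j. gx (s j)) \<longlonglongrightarrow> g0"
    unfolding gx_def g0_def
    by (intro tendsto_intros lipschitz_tendsto[OF glip xts] lin_tendsto[OF linA] lin_tendsto[OF linF xts]
        lin_tendsto[OF linAt xts] lin_tendsto[OF linBt yts] zts)
  have g0e: "F x0 + g0 = gf1 x0 + A z0"
  proof -
    have "At x0 + Bt y0 - c + (1 / \<sigma>) *\<^sub>R z0 = (1 / \<sigma>) *\<^sub>R z0" using r0 by simp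
    then have "\<sigma> *\<^sub>R A (At x0 + Bt y0 - c + (1 / \<sigma>) *\<^sub>R z0) = A z0" using sig0 by (simp add: linear_scale[OF linA])
    then show ?thesis by (simp add: g0_def)
  qed
  have xmin: "f2 x0 + ereal ((1/2) * (x0 \<bullet> F x0) + g0 \<bullet> x0) \<le> f2 u + ereal ((1/2) * (u \<bullet> F u) + g0 \<bullet> u)" for u
  proof (rule lsc_pass[OF f2_props(1,2) xs])
    show "(\<lambda>j. (1/2) * (x (s j) \<bullet> F (x (s j))) + gx (s j) \<bullet> x (s j)) \<longlonglongrightarrow> (1/2) * (x0 \<bullet> F x0) + g0 \<bullet> x0"
      by (intro tendsto_intros xs gxl lin_tendsto[OF linF xs])
    show "(\<lambda>j. (1/2) * (u \<bullet> F u) + gx (s j) \<bullet> u) \<longlonglongrightarrow> (1/2) * (u \<bullet> F u) + g0 \<bullet> u"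
      by (intro tendsto_intros gxl)
    show "f2 (x (s j)) + ereal ((1/2) * (x (s j) \<bullet> F (x (s j))) + gx (s j) \<bullet> x (s j)) \<le> f2 u + ereal ((1/2) * (u \<bullet> F u) + gx (s j) \<bullet> u)" for j
      unfolding gx_def by (rule x_step)
  qed
  have xsub: "f2 x0 \<noteq> \<infinity> \<and> (\<forall>u. f2 x0 + ereal ((- (F x0 + g0)) \<bullet> (u - x0)) \<le> f2 u)"
    by (rule min_quad_subgrad[OF f2_props(3) f2_props(2) F_psd xmin])
  define gy where "gy k = gh1 (yt k) + \<sigma> *\<^sub>R B (At (x k) + Bt (yt k) - c + (1 / \<sigma>) *\<^sub>R z k) - H (yt k)" for k
  define h0 where "h0 = gh1 y0 + \<sigma> *\<^sub>R B (At x0 + Bt y0 - c + (1 / \<sigma>) *\<^sub>R z0) - H y0"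
  have gyl: "(\<lambda>j. gy (s j)) \<longlonglongrightarrow> h0"
    unfolding gy_def h0_def
    by (intro tendsto_intros lipschitz_tendsto[OF hlip yts] lin_tendsto[OF linB] lin_tendsto[OF linH yts]
        lin_tendsto[OF linAt xs] lin_tendsto[OF linBt yts] zs)
  have h0e: "H y0 + h0 = gh1 y0 + B z0"
  proof -
    have "At x0 + Bt y0 - c + (1 / \<sigma>) *\<^sub>R z0 = (1 / \<sigma>) *\<^sub>R z0" using r0 by simp
    then have "\<sigma> *\<^sub>R B (At x0 + Bt y0 - c + (1 / \<sigma>) *\<^sub>R z0) = B z0" using sig0 by (simp add: linear_scale[OF linB])
    then show ?thesis by (simp add: h0_def)
  qed
  have ymin: "h2 y0 + ereal ((1/2) * (y0 \<bullet> H y0) + h0 \<bullet> y0) \<le> h2 v + ereal ((1/2) * (v \<bullet> H v) + h0 \<bullet> v)" for v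
  proof (rule lsc_pass[OF h2_props(1,2) ys])
    show "(\<lambda>j. (1/2) * (y (s j) \<bullet> H (y (s j))) + gy (s j) \<bullet> y (s j)) \<longlonglongrightarrow> (1/2) * (y0 \<bullet> H y0) + h0 \<bullet> y0"
      by (intro tendsto_intros ys gyl lin_tendsto[OF linH ys])
    show "(\<lambda>j. (1/2) * (v \<bullet> H v) + gy (s j) \<bullet> v) \<longlonglongrightarrow> (1/2) * (v \<bullet> H v) + h0 \<bullet> v"
      by (intro tendsto_intros gyl)
    show "h2 (y (s j)) + ereal ((1/2) * (y (s j) \<bullet> H (y (s j))) + gy (s j) \<bullet> y (s j)) \<le> h2 v + ereal ((1/2) * (v \<bullet> H v) + gy (s j) \<bullet> v)" for j
      unfolding gy_def by (rule y_step)
  qed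
  have ysub: "h2 y0 \<noteq> \<infinity> \<and> (\<forall>v. h2 y0 + ereal ((- (H y0 + h0)) \<bullet> (v - y0)) \<le> h2 v)"
    by (rule min_quad_subgrad[OF h2_props(3) h2_props(2) H_psd ymin])
  have "- (gf1 x0 + A z0) \<in> subdiff f2 x0" using xsub g0e by (simp add: subdiff_def)
  moreover have "- (gh1 y0 + B z0) \<in> subdiff h2 y0" using ysub h0e by (simp add: subdiff_def)
  moreover have "adjoint A x0 + adjoint B y0 = c" using r0 by (simp add: At_def Bt_def)
  ultimately show ?thesis unfolding Wstar_def by (auto intro!: bexI[of _ "- (gf1 x0 + A z0)"] bexI[of _ "- (gh1 y0 + B z0)"])
qed

end

lemma sq_bound: fixes v :: "'a::real_normed_vector"
  assumes "\<mu> > 0" "\<mu> * (norm v)\<^sup>2 \<le> C" shows "norm v \<le> sqrt (C / \<mu>)"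
proof (rule real_le_rsqrt)
  show "(norm v)\<^sup>2 \<le> C / \<mu>" using assms by (simp add: field_simps mult.commute)
qed

context gadmm begin

lemma E_expand: "E lam xb yb zb k = (1 / (\<sigma> * \<rho>)) * (norm (z k - zb + (\<sigma> * (\<rho> - 1)) *\<^sub>R At (x k - xb)))\<^sup>2
   + \<sigma> * (2 - \<rho>) * (norm (At (x k - xb)))\<^sup>2 + (1 / \<rho>) * qn Sx (xt (k + 1) - xb) + (1 / \<rho>) * qn Sy (yt k - yb)
   + (2 - \<rho>) * qn Sx (xt k - x k) + \<sigma> * (1 - lam) * (2 - \<rho>) * (norm (At (x k) + Bt (y (k - 1)) - c))\<^sup>2"
  by (simp add: E_def Psi_def Sx_def Sy_def)

lemma E_terms:
  assumes "lam \<le> 1"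
  shows "0 \<le> (1 / (\<sigma> * \<rho>)) * (norm (z k - zb + (\<sigma> * (\<rho> - 1)) *\<^sub>R At (x k - xb)))\<^sup>2"
    "0 \<le> \<sigma> * (2 - \<rho>) * (norm (At (x k - xb)))\<^sup>2"
    "0 \<le> (1 / \<rho>) * qn Sx (xt (k + 1) - xb)" "0 \<le> (1 / \<rho>) * qn Sy (yt k - yb)"
    "0 \<le> (2 - \<rho>) * qn Sx (xt k - x k)" "0 \<le> \<sigma> * (1 - lam) * (2 - \<rho>) * (norm (At (x k) + Bt (y (k - 1)) - c))\<^sup>2"
  using sigma_pos rho assms psd_nonneg[OF Sx_psd] psd_nonneg[OF Sy_psd] by simp_all

lemma E_nonneg: "lam \<le> 1 \<Longrightarrow> 0 \<le> E lam xb yb zb k"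
  unfolding E_expand by (intro add_nonneg_nonneg E_terms)

lemma delta_terms:
  assumes "1/2 \<le> lam" "lam \<le> 1"
  shows "0 \<le> qn (\<lambda>u. (1/2) *\<^sub>R SF u) (xt (k + 1) - x (k + 1))"
    "qn (\<lambda>v. (1/2) *\<^sub>R SH v + (2 - \<rho>) *\<^sub>R (SHh v + T v)) (yt k - y k) \<ge> (2 - \<rho>) * qn Sy (yt k - y k)"
    "0 \<le> (2 - \<rho>) * qn Sy (yt k - y k)"
    "0 \<le> (1 - lam) * (2 - \<rho>) * qn (opadd SFh S) (xt k - x k)"
    "0 \<le> \<sigma> * (2 * lam - 1) * (2 - \<rho>) * (norm (At (x (k + 1)) + Bt (y k) - c))\<^sup>2"
    "0 \<le> (\<sigma> * (1 - lam) * (2 - \<rho>) / 2) * (norm (Bt (y k - y (k - 1))))\<^sup>2"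
    "0 \<le> (lam * (2 - \<rho>)\<^sup>2 / \<rho>) * qn F (x (k + 1) - x k)"
proof -
  show "0 \<le> qn (\<lambda>u. (1/2) *\<^sub>R SF u) (xt (k + 1) - x (k + 1))"
    using psd_nonneg[OF SF_psd] by (simp add: qn_def)
  show "qn (\<lambda>v. (1/2) *\<^sub>R SH v + (2 - \<rho>) *\<^sub>R (SHh v + T v)) (yt k - y k) \<ge> (2 - \<rho>) * qn Sy (yt k - y k)"
    using psd_nonneg[OF SH_psd, of "yt k - y k"] by (simp add: qn_def Sy_def opadd_def inner_add_right)
  show "0 \<le> (2 - \<rho>) * qn Sy (yt k - y k)" using rho psd_nonneg[OF Sy_psd] by simp
  show "0 \<le> (1 - lam) * (2 - \<rho>) * qn (opadd SFh S) (xt k - x k)"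
    using rho assms psd_nonneg[OF Sx_psd] by (simp add: Sx_def)
  show "0 \<le> \<sigma> * (2 * lam - 1) * (2 - \<rho>) * (norm (At (x (k + 1)) + Bt (y k) - c))\<^sup>2"
    using rho assms sigma_pos by simp
  show "0 \<le> (\<sigma> * (1 - lam) * (2 - \<rho>) / 2) * (norm (Bt (y k - y (k - 1))))\<^sup>2"
    using rho assms sigma_pos by simp
  show "0 \<le> (lam * (2 - \<rho>)\<^sup>2 / \<rho>) * qn F (x (k + 1) - x k)"
    using rho assms psd_nonneg[OF F_psd] by simp
qed

lemma delta_nonneg: "1/2 \<le> lam \<Longrightarrow> lam \<le> 1 \<Longrightarrow> 0 \<le> delta lam k"
  using delta_terms[of lam k] unfolding delta_def by linarith

lemma xi_nonneg: "0 \<le> xi k"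
  using psd_nonneg[OF SFh_psd] psd_nonneg[OF SHh_psd] by (simp add: xi_def add_nonneg_nonneg)

lemma fejer_app:
  assumes kkt: "(xb, yb, zb) \<in> Wstar gf1 f2 gh1 h2 A B c" and lam: "1/2 \<le> lam" "lam \<le> 1"
    and sxi: "summable xi"
  shows "\<forall>n\<ge>1. E lam xb yb zb n \<le> E lam xb yb zb 1 + suminf xi" "delta lam \<longlonglongrightarrow> 0" "convergent (E lam xb yb zb)"
proof -
  have step: "E lam xb yb zb (Suc k) \<le> E lam xb yb zb k - delta lam k + xi k" if "k \<ge> 1" for k
    using part1[OF kkt _ lam(2) that] lam(1) by simp
  note F = fejer[where K=1 and a="E lam xb yb zb" and d="delta lam" and e=xi, OF step E_nonneg[OF lam(2)]
      delta_nonneg[OF lam] xi_nonneg sxi]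
  show "\<forall>n\<ge>1. E lam xb yb zb n \<le> E lam xb yb zb 1 + suminf xi" "delta lam \<longlonglongrightarrow> 0" "convergent (E lam xb yb zb)"
    using F by simp_all
qed

end

context gadmm begin

lemma part2_conv:
  fixes lam :: real
  assumes kkt: "(xb, yb, zb) \<in> Wstar gf1 f2 gh1 h2 A B c" and lam: "1/2 < lam" "lam \<le> 1"
    and Sypd: "pd_op (opadd SHh T)" and sxi: "summable xi"
    and glip: "\<exists>L. \<forall>u v. norm (gf1 u - gf1 v) \<le> L * norm (u - v)"
    and hlip: "\<exists>L. \<forall>u v. norm (gh1 u - gh1 v) \<le> L * norm (u - v)"
  shows "\<exists>xs ys zs. x \<longlonglongrightarrow> xs \<and> y \<longlonglongrightarrow> ys \<and> z \<longlonglongrightarrow> zs \<and> (xs, ys, zs) \<in> Wstar gf1 f2 gh1 h2 A B c"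
proof -
  have lam': "1/2 \<le> lam" using lam by simp
  note FA = fejer_app[OF kkt lam' lam(2) sxi]
  define M where "M = E lam xb yb zb 1 + suminf xi"
  have EM: "\<And>n. n \<ge> 1 \<Longrightarrow> E lam xb yb zb n \<le> M" using FA(1) by (simp add: M_def)
  have dl: "delta lam \<longlonglongrightarrow> 0" by (rule FA(2))
  note dt = delta_terms[OF lam' lam(2)]
  have dsplit: "delta lam k = qn (\<lambda>u. (1/2) *\<^sub>R SF u) (xt (k + 1) - x (k + 1))
                      + qn (\<lambda>v. (1/2) *\<^sub>R SH v + (2 - \<rho>) *\<^sub>R (SHh v + T v)) (yt k - y k)
                      + (1 - lam) * (2 - \<rho>) * qn (opadd SFh S) (xt k - x k)
                      + \<sigma> * (2 * lam - 1) * (2 - \<rho>) * (norm (At (x (k + 1)) + Bt (y k) - c))\<^sup>2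
                      + (\<sigma> * (1 - lam) * (2 - \<rho>) / 2) * (norm (Bt (y k - y (k - 1))))\<^sup>2
                      + (lam * (2 - \<rho>)\<^sup>2 / \<rho>) * qn F (x (k + 1) - x k)" for k
    by (simp add: delta_def)
  define m where "m k = At (x (k + 1)) + Bt (y k) - c" for k
  have m0: "m \<longlonglongrightarrow> 0"
  proof -
    have c0: "\<sigma> * (2 * lam - 1) * (2 - \<rho>) > 0" using sigma_pos lam rho by simp
    have "(\<lambda>k. \<sigma> * (2 * lam - 1) * (2 - \<rho>) * (norm (m k))\<^sup>2) \<longlonglongrightarrow> 0"
    proof (rule tendsto_zero_sandwich[OF _ _ dl])
      fix k show "0 \<le> \<sigma> * (2 * lam - 1) * (2 - \<rho>) * (norm (m k))\<^sup>2" using c0 by simp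
      show "\<sigma> * (2 * lam - 1) * (2 - \<rho>) * (norm (m k))\<^sup>2 \<le> delta lam k"
        using dt[of k] unfolding dsplit m_def by linarith
    qed
    then have "(\<lambda>k. (norm (m k))\<^sup>2) \<longlonglongrightarrow> 0" by (rule tendsto_const_mult_zero[OF c0, where g="\<lambda>k. (norm (m k))\<^sup>2"])
    then show ?thesis by (rule tendsto_sq_norm_zero)
  qed
  have D0: "(\<lambda>k. x (Suc k) - x k) \<longlonglongrightarrow> 0"
  proof -
    have c0: "lam * (2 - \<rho>)\<^sup>2 / \<rho> > 0" using lam rho by simp
    have "(\<lambda>k. lam * (2 - \<rho>)\<^sup>2 / \<rho> * qn F (x (Suc k) - x k)) \<longlonglongrightarrow> 0"
    proof (rule tendsto_zero_sandwich[OF _ _ dl])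
      fix k show "0 \<le> lam * (2 - \<rho>)\<^sup>2 / \<rho> * qn F (x (Suc k) - x k)"
        using c0 psd_nonneg[OF F_psd, of "x (Suc k) - x k"] by (intro mult_nonneg_nonneg) simp_all
      show "lam * (2 - \<rho>)\<^sup>2 / \<rho> * qn F (x (Suc k) - x k) \<le> delta lam k"
        using dt[of k] unfolding dsplit by simp
    qed
    then have "(\<lambda>k. qn F (x (Suc k) - x k)) \<longlonglongrightarrow> 0" by (rule tendsto_const_mult_zero[OF c0, where g="\<lambda>k. qn F (x (Suc k) - x k)"])
    then show ?thesis by (rule pd_qn_to_zero[OF F_pd])
  qed
  have Sypd': "pd_op Sy" using Sypd by (simp add: Sy_def)
  have ey: "(\<lambda>k. y k - yt k) \<longlonglongrightarrow> 0"
  proof -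
    have c0: "2 - \<rho> > 0" using rho by simp
    have "(\<lambda>k. (2 - \<rho>) * qn Sy (yt k - y k)) \<longlonglongrightarrow> 0"
    proof (rule tendsto_zero_sandwich[OF _ _ dl])
      fix k show "0 \<le> (2 - \<rho>) * qn Sy (yt k - y k)" by (rule dt)
      show "(2 - \<rho>) * qn Sy (yt k - y k) \<le> delta lam k"
        using dt[of k] unfolding dsplit by linarith
    qed
    then have "(\<lambda>k. qn Sy (yt k - y k)) \<longlonglongrightarrow> 0" by (rule tendsto_const_mult_zero[OF c0, where g="\<lambda>k. qn Sy (yt k - y k)"])
    then have "(\<lambda>k. yt k - y k) \<longlonglongrightarrow> 0" by (rule pd_qn_to_zero[OF Sypd'])
    then have "(\<lambda>k. - (yt k - y k)) \<longlonglongrightarrow> - 0" by (rule tendsto_minus)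
    then show ?thesis by simp
  qed
  have ex: "(\<lambda>k. x k - xt k) \<longlonglongrightarrow> 0"
  proof -
    have "(\<lambda>k. norm (x k - xt k)) \<longlonglongrightarrow> 0"
    proof (rule contraction_to_zero[where q = "\<bar>1 - \<rho>\<bar>" and b = "\<lambda>k. norm (x (Suc k) - x k)"])
      fix k
      have "x (Suc k) - xt (Suc k) = (x (Suc k) - x k) + (1 - \<rho>) *\<^sub>R (x k - xt k)"
        by (simp add: relax_x algebra_simps)
      then have "norm (x (Suc k) - xt (Suc k)) \<le> norm (x (Suc k) - x k) + norm ((1 - \<rho>) *\<^sub>R (x k - xt k))"
        by (metis norm_triangle_ineq)
      then show "norm (x (Suc k) - xt (Suc k)) \<le> \<bar>1 - \<rho>\<bar> * norm (x k - xt k) + norm (x (Suc k) - x k)"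
        by simp
      show "0 \<le> \<bar>1 - \<rho>\<bar>" by simp
      show "\<bar>1 - \<rho>\<bar> < 1" using rho by simp
      show "0 \<le> norm (x k - xt k)" by simp
      show "(\<lambda>k. norm (x (Suc k) - x k)) \<longlonglongrightarrow> 0" using tendsto_norm_zero[OF D0] .
    qed
    then show ?thesis by (rule tendsto_norm_zero_cancel)
  qed
  have res: "(\<lambda>k. At (x k) + Bt (y k) - c) \<longlonglongrightarrow> 0"
  proof -
    have "(\<lambda>k. m k - At (x (Suc k) - x k)) \<longlonglongrightarrow> 0 - At 0"
      by (intro tendsto_intros m0 lin_tendsto[OF linAt D0])
    moreover have "m k - At (x (Suc k) - x k) = At (x k) + Bt (y k) - c" for k
      by (simp add: m_def linear_diff[OF linAt])
    ultimately show ?thesis by (simp add: linear_0[OF linAt])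
  qed
  have ez: "(\<lambda>k. z k - zt k) \<longlonglongrightarrow> 0"
  proof -
    have "(\<lambda>k. \<sigma> *\<^sub>R ((At (x k) + Bt (y k) - c) - Bt (y k - yt k))) \<longlonglongrightarrow> \<sigma> *\<^sub>R (0 - Bt 0)"
      by (intro tendsto_intros res lin_tendsto[OF linBt ey])
    moreover have "\<sigma> *\<^sub>R ((At (x k) + Bt (y k) - c) - Bt (y k - yt k)) = z k - zt k" for k
      by (simp add: z_step linear_diff[OF linBt] algebra_simps)
    ultimately show ?thesis by (simp add: linear_0[OF linBt])
  qed
  obtain muF where muF: "muF > 0" "\<And>u. muF * (norm u)\<^sup>2 \<le> qn F u" using pd_lower[OF F_pd] by blast
  obtain muY where muY: "muY > 0" "\<And>u. muY * (norm u)\<^sup>2 \<le> qn Sy u" using pd_lower[OF Sypd'] by blast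
  have M0: "0 \<le> M" using EM[of 1] E_nonneg[OF lam(2), of xb yb zb 1] by simp
  have Eb: "\<And>k. k \<ge> 1 \<Longrightarrow> (1 / (\<sigma> * \<rho>)) * (norm (z k - zb + (\<sigma> * (\<rho> - 1)) *\<^sub>R At (x k - xb)))\<^sup>2 \<le> M
       \<and> \<sigma> * (2 - \<rho>) * (norm (At (x k - xb)))\<^sup>2 \<le> M \<and> (1 / \<rho>) * qn Sx (xt (k + 1) - xb) \<le> M
       \<and> (1 / \<rho>) * qn Sy (yt k - yb) \<le> M \<and> (2 - \<rho>) * qn Sx (xt k - x k) \<le> M"
  proof -
    fix k :: nat assume k: "k \<ge> 1"
    note t1 = E_terms(1)[OF lam(2), where k=k and zb=zb and xb=xb]
    note t2 = E_terms(2)[OF lam(2), where k=k and xb=xb]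
    note t3 = E_terms(3)[OF lam(2), where k=k and xb=xb]
    note t4 = E_terms(4)[OF lam(2), where k=k and yb=yb]
    note t5 = E_terms(5)[OF lam(2), where k=k]
    note t6 = E_terms(6)[OF lam(2), where k=k]
    have "E lam xb yb zb k \<le> M" using EM[OF k] .
    then show "?thesis k" using t1 t2 t3 t4 t5 t6 unfolding E_expand by linarith
  qed
  have bA: "norm (At (x k - xb)) \<le> sqrt (M / (\<sigma> * (2 - \<rho>)))" if "k \<ge> 1" for k
    using Eb[OF that] sigma_pos rho by (intro sq_bound) simp_all
  have bZ: "norm (z k - zb + (\<sigma> * (\<rho> - 1)) *\<^sub>R At (x k - xb)) \<le> sqrt (M / (1 / (\<sigma> * \<rho>)))" if "k \<ge> 1" for k
    using Eb[OF that] sigma_pos rho by (intro sq_bound) simp_all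
  have bY: "norm (yt k - yb) \<le> sqrt ((\<rho> * M) / muY)" if "k \<ge> 1" for k
  proof (rule sq_bound[OF muY(1)])
    have "(1 / \<rho>) * qn Sy (yt k - yb) \<le> M" using Eb[OF that] by simp
    then have "qn Sy (yt k - yb) \<le> \<rho> * M" using rho by (simp add: field_simps)
    then show "muY * (norm (yt k - yb))\<^sup>2 \<le> \<rho> * M" using muY(2)[of "yt k - yb"] by linarith
  qed
  define CX where "CX = 2 * (\<rho> * M) + 2 * (M / (2 - \<rho>)) + M / (2 - \<rho>)"
  have bX: "norm (x k - xb) \<le> sqrt (CX / muF)" if "k \<ge> 2" for k
  proof (rule sq_bound[OF muF(1)])
    have k1: "k - 1 \<ge> 1" "k - 1 + 1 = k" "k \<ge> 1" using that by auto
    have a1: "qn Sx (xt k - xb) \<le> \<rho> * M"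
    proof -
      have "(1 / \<rho>) * qn Sx (xt (k - 1 + 1) - xb) \<le> M" using Eb[OF k1(1)] by simp
      then show ?thesis unfolding k1(2) using rho by (simp add: field_simps)
    qed
    have a2: "qn Sx (x k - xt k) \<le> M / (2 - \<rho>)"
    proof -
      have "(2 - \<rho>) * qn Sx (xt k - x k) \<le> M" using Eb[OF k1(3)] by simp
      then have "qn Sx (xt k - x k) \<le> M / (2 - \<rho>)" using rho by (simp add: field_simps)
      then show ?thesis using qn_minus_commute[OF linSx, of "x k" "xt k"] by simp
    qed
    have a3: "\<sigma> * (norm (At (x k - xb)))\<^sup>2 \<le> M / (2 - \<rho>)"
    proof -
      have "\<sigma> * (2 - \<rho>) * (norm (At (x k - xb)))\<^sup>2 \<le> M" using Eb[OF k1(3)] by simp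
      then show ?thesis using rho by (simp add: field_simps)
    qed
    have "qn Sx (x k - xb) \<le> 2 * qn Sx (xt k - xb) + 2 * qn Sx (x k - xt k)"
      using qn_sum_le[OF Sx_psd, of "xt k - xb" "x k - xt k"] by simp
    then have "qn F (x k - xb) \<le> CX" unfolding qnF CX_def using a1 a2 a3 by linarith
    then show "muF * (norm (x k - xb))\<^sup>2 \<le> CX" using muF(2)[of "x k - xb"] by linarith
  qed
  obtain BY where BY: "\<And>k. norm (y k - yt k) \<le> BY"
    using convergent_imp_Bseq[of "\<lambda>k. y k - yt k"] ey by (auto simp: convergent_def Bseq_def)
  define w where "w k = (x (k + 2), y (k + 2), z (k + 2))" for k
  define BW where "BW = (norm xb + sqrt (CX / muF)) + (norm yb + sqrt ((\<rho> * M) / muY) + BY)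
     + (norm zb + sqrt (M / (1 / (\<sigma> * \<rho>))) + \<bar>\<sigma> * (\<rho> - 1)\<bar> * sqrt (M / (\<sigma> * (2 - \<rho>))))"
  have "norm (w k) \<le> BW" for k
  proof -
    define j where "j = k + 2"
    have j: "j \<ge> 2" "j \<ge> 1" by (auto simp: j_def)
    have nx: "norm (x j) \<le> norm xb + sqrt (CX / muF)"
      using bX[OF j(1)] norm_triangle_ineq[of "x j - xb" xb] by simp
    have ny: "norm (y j) \<le> norm yb + sqrt ((\<rho> * M) / muY) + BY"
    proof -
      have "y j = (yt j - yb) + yb + (y j - yt j)" by simp
      then have "norm (y j) \<le> norm (yt j - yb) + norm yb + norm (y j - yt j)"
        by (metis norm_triangle_ineq order_trans add_right_mono)
      then show ?thesis using bY[OF j(2)] BY[of j] by linarith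
    qed
    have nz: "norm (z j) \<le> norm zb + sqrt (M / (1 / (\<sigma> * \<rho>))) + \<bar>\<sigma> * (\<rho> - 1)\<bar> * sqrt (M / (\<sigma> * (2 - \<rho>)))"
    proof -
      have "z j = (z j - zb + (\<sigma> * (\<rho> - 1)) *\<^sub>R At (x j - xb)) + zb - (\<sigma> * (\<rho> - 1)) *\<^sub>R At (x j - xb)" by simp
      then have "norm (z j) \<le> norm (z j - zb + (\<sigma> * (\<rho> - 1)) *\<^sub>R At (x j - xb)) + norm zb + norm ((\<sigma> * (\<rho> - 1)) *\<^sub>R At (x j - xb))"
        by (metis norm_triangle_ineq norm_triangle_ineq4 order_trans add_right_mono)
      moreover have "norm ((\<sigma> * (\<rho> - 1)) *\<^sub>R At (x j - xb)) \<le> \<bar>\<sigma> * (\<rho> - 1)\<bar> * sqrt (M / (\<sigma> * (2 - \<rho>)))"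
        using bA[OF j(2)] by (simp add: mult_left_mono)
      ultimately show ?thesis using bZ[OF j(2)] by linarith
    qed
    have "norm (w k) \<le> norm (x j) + norm (y j, z j)" unfolding w_def j_def by (rule norm_Pair_le)
    also have "\<dots> \<le> norm (x j) + (norm (y j) + norm (z j))" using norm_Pair_le[of "y j" "z j"] by simp
    finally show ?thesis using nx ny nz unfolding BW_def by linarith
  qed
  then have "bounded (range w)" by (auto simp: bounded_iff)
  then obtain l r where r: "strict_mono r" and wl: "(w \<circ> r) \<longlonglongrightarrow> l"
    using bounded_imp_convergent_subsequence by blast
  obtain x0 y0 z0 where l: "l = (x0, y0, z0)" by (cases l) auto
  define s where "s j = r j + 2" for j
  have s: "strict_mono s" using r by (simp add: s_def strict_mono_def)
  have xs: "(\<lambda>j. x (s j)) \<longlonglongrightarrow> x0" using tendsto_fst[OF wl] by (simp add: l w_def s_def o_def)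
  have ys: "(\<lambda>j. y (s j)) \<longlonglongrightarrow> y0" using tendsto_fst[OF tendsto_snd[OF wl]] by (simp add: l w_def s_def o_def)
  have zs: "(\<lambda>j. z (s j)) \<longlonglongrightarrow> z0" using tendsto_snd[OF tendsto_snd[OF wl]] by (simp add: l w_def s_def o_def)
  have W0: "(x0, y0, z0) \<in> Wstar gf1 f2 gh1 h2 A B c"
    by (rule limit_in_W[OF s xs ys zs ex ey ez res glip hlip])
  note FB = fejer_app[OF W0 lam' lam(2) sxi]
  define E0 where "E0 = E lam x0 y0 z0"
  obtain L where EL: "E0 \<longlonglongrightarrow> L" using FB(3) by (auto simp: convergent_def E0_def)
  have sub: "(\<lambda>j. f (s j)) \<longlonglongrightarrow> l" if "f \<longlonglongrightarrow> l" for f :: "nat \<Rightarrow> 'w::topological_space" and l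
    using LIMSEQ_subseq_LIMSEQ[OF that s] by (simp add: o_def)
  have xts: "(\<lambda>j. xt (s j)) \<longlonglongrightarrow> x0"
  proof -
    have "(\<lambda>j. x (s j) - (x (s j) - xt (s j))) \<longlonglongrightarrow> x0 - 0" by (intro tendsto_intros xs sub[OF ex])
    then show ?thesis by simp
  qed
  have yts: "(\<lambda>j. yt (s j)) \<longlonglongrightarrow> y0"
  proof -
    have "(\<lambda>j. y (s j) - (y (s j) - yt (s j))) \<longlonglongrightarrow> y0 - 0" by (intro tendsto_intros ys sub[OF ey])
    then show ?thesis by simp
  qed
  have xts1: "(\<lambda>j. xt (s j + 1)) \<longlonglongrightarrow> x0"
  proof -
    have "(\<lambda>j. xt (s j) + \<rho> *\<^sub>R (x (s j) - xt (s j))) \<longlonglongrightarrow> x0 + \<rho> *\<^sub>R 0"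
      by (intro tendsto_intros xts sub[OF ex])
    then show ?thesis by (simp add: relax_x)
  qed
  have m_s: "(\<lambda>j. At (x (s j)) + Bt (y (s j - 1)) - c) \<longlonglongrightarrow> 0"
  proof -
    have "(\<lambda>k. m (k + 1)) \<longlonglongrightarrow> 0" by (rule LIMSEQ_ignore_initial_segment[OF m0])
    then have "(\<lambda>j. m (r j + 1)) \<longlonglongrightarrow> 0" using LIMSEQ_subseq_LIMSEQ[OF _ r] by (simp add: o_def)
    moreover have "m (r j + 1) = At (x (s j)) + Bt (y (s j - 1)) - c" for j by (simp add: m_def s_def)
    ultimately show ?thesis by simp
  qed
  have Es: "(\<lambda>j. E0 (s j)) \<longlonglongrightarrow> 0"
  proof -
    have "(\<lambda>j. (1 / (\<sigma> * \<rho>)) * (norm (z (s j) - z0 + (\<sigma> * (\<rho> - 1)) *\<^sub>R At (x (s j) - x0)))\<^sup>2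
      + \<sigma> * (2 - \<rho>) * (norm (At (x (s j) - x0)))\<^sup>2 + (1 / \<rho>) * qn Sx (xt (s j + 1) - x0) + (1 / \<rho>) * qn Sy (yt (s j) - y0)
      + (2 - \<rho>) * qn Sx (xt (s j) - x (s j)) + \<sigma> * (1 - lam) * (2 - \<rho>) * (norm (At (x (s j)) + Bt (y (s j - 1)) - c))\<^sup>2)
      \<longlonglongrightarrow> (1 / (\<sigma> * \<rho>)) * (norm (z0 - z0 + (\<sigma> * (\<rho> - 1)) *\<^sub>R At (x0 - x0)))\<^sup>2
      + \<sigma> * (2 - \<rho>) * (norm (At (x0 - x0)))\<^sup>2 + (1 / \<rho>) * qn Sx (x0 - x0) + (1 / \<rho>) * qn Sy (y0 - y0)
      + (2 - \<rho>) * qn Sx (x0 - x0) + \<sigma> * (1 - lam) * (2 - \<rho>) * (norm (0::'z))\<^sup>2"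
      by (intro tendsto_intros zs lin_tendsto[OF linAt] qn_tendsto[OF linSx] qn_tendsto[OF linSy]
          xs ys xts xts1 yts m_s)
    then show ?thesis unfolding E0_def E_expand
      by (simp add: qn_def linear_0[OF linAt] linear_0[OF linSx] linear_0[OF linSy])
  qed
  have "L = 0"
  proof -
    have "(\<lambda>j. E0 (s j)) \<longlonglongrightarrow> L" by (rule sub[OF EL])
    then show ?thesis using Es by (rule LIMSEQ_unique)
  qed
  then have E0l: "E0 \<longlonglongrightarrow> 0" using EL by simp
  note u1 = E_terms(1)[OF lam(2), where zb=z0 and xb=x0]
  note u2 = E_terms(2)[OF lam(2), where xb=x0]
  note u3 = E_terms(3)[OF lam(2), where xb=x0]
  note u4 = E_terms(4)[OF lam(2), where yb=y0]
  note u5 = E_terms(5)[OF lam(2)]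
  note u6 = E_terms(6)[OF lam(2)]
  have Eeq: "E0 k = (1 / (\<sigma> * \<rho>)) * (norm (z k - z0 + (\<sigma> * (\<rho> - 1)) *\<^sub>R At (x k - x0)))\<^sup>2
   + \<sigma> * (2 - \<rho>) * (norm (At (x k - x0)))\<^sup>2 + (1 / \<rho>) * qn Sx (xt (k + 1) - x0) + (1 / \<rho>) * qn Sy (yt k - y0)
   + (2 - \<rho>) * qn Sx (xt k - x k) + \<sigma> * (1 - lam) * (2 - \<rho>) * (norm (At (x k) + Bt (y (k - 1)) - c))\<^sup>2" for k
    unfolding E0_def by (rule E_expand)
  have c1: "(\<lambda>k. (1 / (\<sigma> * \<rho>)) * (norm (z k - z0 + (\<sigma> * (\<rho> - 1)) *\<^sub>R At (x k - x0)))\<^sup>2) \<longlonglongrightarrow> 0"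
    by (rule tendsto_zero_sandwich[OF _ _ E0l]) (use u1 u2 u3 u4 u5 u6 Eeq in \<open>force+\<close>)
  have c2: "(\<lambda>k. \<sigma> * (2 - \<rho>) * (norm (At (x k - x0)))\<^sup>2) \<longlonglongrightarrow> 0"
    by (rule tendsto_zero_sandwich[OF _ _ E0l]) (use u1 u2 u3 u4 u5 u6 Eeq in \<open>force+\<close>)
  have c3: "(\<lambda>k. (1 / \<rho>) * qn Sx (xt (k + 1) - x0)) \<longlonglongrightarrow> 0"
    by (rule tendsto_zero_sandwich[OF _ _ E0l]) (use u1 u2 u3 u4 u5 u6 Eeq in \<open>force+\<close>)
  have c4: "(\<lambda>k. (1 / \<rho>) * qn Sy (yt k - y0)) \<longlonglongrightarrow> 0"
    by (rule tendsto_zero_sandwich[OF _ _ E0l]) (use u1 u2 u3 u4 u5 u6 Eeq in \<open>force+\<close>)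
  have c5: "(\<lambda>k. (2 - \<rho>) * qn Sx (xt k - x k)) \<longlonglongrightarrow> 0"
    by (rule tendsto_zero_sandwich[OF _ _ E0l]) (use u1 u2 u3 u4 u5 u6 Eeq in \<open>force+\<close>)
  have pr: "\<rho> > 0" "2 - \<rho> > 0" "1 / (\<sigma> * \<rho>) > 0" "1 / \<rho> > 0" "\<sigma> * (2 - \<rho>) > 0" using rho sigma_pos by auto
  have v1: "(\<lambda>k. z k - z0 + (\<sigma> * (\<rho> - 1)) *\<^sub>R At (x k - x0)) \<longlonglongrightarrow> 0"
    by (rule tendsto_sq_norm_zero, rule tendsto_const_mult_zero[OF pr(3)]) (rule c1)
  have v2: "(\<lambda>k. At (x k - x0)) \<longlonglongrightarrow> 0"
    by (rule tendsto_sq_norm_zero, rule tendsto_const_mult_zero[OF pr(5)]) (rule c2)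
  have zl: "z \<longlonglongrightarrow> z0"
  proof -
    have "(\<lambda>k. (z k - z0 + (\<sigma> * (\<rho> - 1)) *\<^sub>R At (x k - x0)) - (\<sigma> * (\<rho> - 1)) *\<^sub>R At (x k - x0)) \<longlonglongrightarrow> 0 - (\<sigma> * (\<rho> - 1)) *\<^sub>R 0"
      by (intro tendsto_intros v1 v2)
    then have "(\<lambda>k. z k - z0) \<longlonglongrightarrow> 0" by simp
    then show ?thesis by (rule LIM_zero_cancel)
  qed
  have yl: "y \<longlonglongrightarrow> y0"
  proof -
    have "(\<lambda>k. qn Sy (yt k - y0)) \<longlonglongrightarrow> 0" by (rule tendsto_const_mult_zero[OF pr(4)]) (rule c4)
    then have "(\<lambda>k. yt k - y0) \<longlonglongrightarrow> 0" by (rule pd_qn_to_zero[OF Sypd'])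
    then have "(\<lambda>k. (yt k - y0) + (y k - yt k)) \<longlonglongrightarrow> 0 + 0" by (intro tendsto_intros ey)
    then have "(\<lambda>k. y k - y0) \<longlonglongrightarrow> 0" by simp
    then show ?thesis by (rule LIM_zero_cancel)
  qed
  have xl: "x \<longlonglongrightarrow> x0"
  proof -
    have a1: "(\<lambda>k. qn Sx (xt k - x0)) \<longlonglongrightarrow> 0"
    proof -
      have "(\<lambda>k. qn Sx (xt (k + 1) - x0)) \<longlonglongrightarrow> 0" by (rule tendsto_const_mult_zero[OF pr(4)]) (rule c3)
      then show ?thesis by (rule LIMSEQ_offset)
    qed
    have a2: "(\<lambda>k. qn Sx (x k - xt k)) \<longlonglongrightarrow> 0"
    proof -
      have "(\<lambda>k. qn Sx (xt k - x k)) \<longlonglongrightarrow> 0" by (rule tendsto_const_mult_zero[OF pr(2)]) (rule c5)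
      moreover have "(\<lambda>k. qn Sx (x k - xt k)) = (\<lambda>k. qn Sx (xt k - x k))"
        by (rule ext) (rule qn_minus_commute[OF linSx])
      ultimately show ?thesis by simp
    qed
    have a3: "(\<lambda>k. \<sigma> * (norm (At (x k - x0)))\<^sup>2) \<longlonglongrightarrow> 0"
    proof -
      have "(\<lambda>k. \<sigma> * (norm (At (x k - x0)))\<^sup>2) \<longlonglongrightarrow> \<sigma> * (norm (0::'z))\<^sup>2" by (intro tendsto_intros v2)
      then show ?thesis by simp
    qed
    have hl: "(\<lambda>k. 2 * qn Sx (xt k - x0) + 2 * qn Sx (x k - xt k) + \<sigma> * (norm (At (x k - x0)))\<^sup>2) \<longlonglongrightarrow> 2 * 0 + 2 * 0 + 0"
      by (intro tendsto_intros a1 a2 a3)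
    have "(\<lambda>k. qn F (x k - x0)) \<longlonglongrightarrow> 0"
    proof (rule tendsto_zero_sandwich[where h="\<lambda>k. 2 * qn Sx (xt k - x0) + 2 * qn Sx (x k - xt k) + \<sigma> * (norm (At (x k - x0)))\<^sup>2"])
      fix k
      show "0 \<le> qn F (x k - x0)" by (rule psd_nonneg[OF F_psd])
      have "qn Sx (x k - x0) \<le> 2 * qn Sx (xt k - x0) + 2 * qn Sx (x k - xt k)"
        using qn_sum_le[OF Sx_psd, of "xt k - x0" "x k - xt k"] by simp
      then show "qn F (x k - x0) \<le> 2 * qn Sx (xt k - x0) + 2 * qn Sx (x k - xt k) + \<sigma> * (norm (At (x k - x0)))\<^sup>2"
        unfolding qnF by linarith
    qed (use hl in simp)
    then have "(\<lambda>k. x k - x0) \<longlonglongrightarrow> 0" by (rule pd_qn_to_zero[OF F_pd])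
    then show ?thesis by (rule LIM_zero_cancel)
  qed
  show ?thesis using xl yl zl W0 by blast
qed

end

context gadmm begin

lemma f1_conv: "f1 u \<ge> f1 u' + (u - u') \<bullet> gf1 u'"
  using f1_bounds[of u u'] psd_nonneg[OF SF_psd, of "u - u'"] by linarith
lemma h1_conv: "h1 v \<ge> h1 v' + (v - v') \<bullet> gh1 v'"
  using h1_bounds[of v v'] psd_nonneg[OF SH_psd, of "v - v'"] by linarith

lemma lagr_ge:
  assumes kkt: "(x0, y0, z0) \<in> Wstar gf1 f2 gh1 h2 A B c"
  shows "lagrangian f1 f2 h1 h2 A B c x0 y0 z0 \<le> lagrangian f1 f2 h1 h2 A B c u v z0"
proof -
  note kf = kkt_facts[OF kkt]
  obtain a where a: "f2 x0 = ereal a" using kf(2) f2_props(2) by (cases "f2 x0") (auto simp: proper_fun_def)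
  obtain b where b: "h2 y0 = ereal b" using kf(4) h2_props(2) by (cases "h2 y0") (auto simp: proper_fun_def)
  have L0: "lagrangian f1 f2 h1 h2 A B c x0 y0 z0 = ereal (f1 x0 + a + h1 y0 + b)"
    using kf(1) a b by (simp add: lagrangian_def primal_obj_def At_def[symmetric] Bt_def[symmetric])
  show ?thesis
  proof (cases "f2 u = \<infinity> \<or> h2 v = \<infinity>")
    case True
    moreover have "f2 u \<noteq> -\<infinity>" "h2 v \<noteq> -\<infinity>" using f2_props(2) h2_props(2) by (auto simp: proper_fun_def)
    ultimately have "lagrangian f1 f2 h1 h2 A B c u v z0 = \<infinity>"
      by (auto simp: lagrangian_def primal_obj_def)
    then show ?thesis by simp
  next
    case False
    moreover have "f2 u \<noteq> -\<infinity>" "h2 v \<noteq> -\<infinity>" using f2_props(2) h2_props(2) by (auto simp: proper_fun_def)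
    ultimately obtain p q where p: "f2 u = ereal p" and q: "h2 v = ereal q"
      by (cases "f2 u"; cases "h2 v") auto
    have s1: "a + (- (gf1 x0 + A z0)) \<bullet> (u - x0) \<le> p" using kf(3)[of u] a p by simp
    have s2: "b + (- (gh1 y0 + B z0)) \<bullet> (v - y0) \<le> q" using kf(5)[of v] b q by simp
    have c1: "f1 u \<ge> f1 x0 + (u - x0) \<bullet> gf1 x0" by (rule f1_conv)
    have c2: "h1 v \<ge> h1 y0 + (v - y0) \<bullet> gh1 y0" by (rule h1_conv)
    have lin: "(- (gf1 x0 + A z0)) \<bullet> (u - x0) + (u - x0) \<bullet> gf1 x0 + (- (gh1 y0 + B z0)) \<bullet> (v - y0) + (v - y0) \<bullet> gh1 y0
        + z0 \<bullet> (At u + Bt v - c) = 0"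
    proof -
      have i1: "(- (gf1 x0 + A z0)) \<bullet> (u - x0) = - (gf1 x0 \<bullet> (u - x0)) - z0 \<bullet> At (u - x0)"
        unfolding inner_minus_left inner_add_left adjA by simp
      have i2: "(- (gh1 y0 + B z0)) \<bullet> (v - y0) = - (gh1 y0 \<bullet> (v - y0)) - z0 \<bullet> Bt (v - y0)"
        unfolding inner_minus_left inner_add_left adjB by simp
      have i3: "(u - x0) \<bullet> gf1 x0 = gf1 x0 \<bullet> (u - x0)" "(v - y0) \<bullet> gh1 y0 = gh1 y0 \<bullet> (v - y0)"
        by (simp_all add: inner_commute)
      have "At (u - x0) + Bt (v - y0) = At u + Bt v - c"
        using kf(1) by (simp add: linear_diff[OF linAt] linear_diff[OF linBt] algebra_simps)
      then have i4: "z0 \<bullet> (At u + Bt v - c) = z0 \<bullet> At (u - x0) + z0 \<bullet> Bt (v - y0)"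
        by (metis inner_add_right)
      show ?thesis using i1 i2 i3 i4 by linarith
    qed
    have "lagrangian f1 f2 h1 h2 A B c u v z0 = ereal (f1 u + p + h1 v + q + z0 \<bullet> (At u + Bt v - c))"
      using p q by (simp add: lagrangian_def primal_obj_def At_def[symmetric] Bt_def[symmetric])
    moreover have "f1 x0 + a + h1 y0 + b \<le> f1 u + p + h1 v + q + z0 \<bullet> (At u + Bt v - c)"
      using s1 s2 c1 c2 lin by linarith
    ultimately show ?thesis using L0 by simp
  qed
qed

lemma kkt_optimal:
  assumes kkt: "(x0, y0, z0) \<in> Wstar gf1 f2 gh1 h2 A B c"
  shows "primal_optimal f1 f2 h1 h2 A B c x0 y0 \<and> dual_optimal f1 f2 h1 h2 A B c z0"
proof -
  note kf = kkt_facts[OF kkt]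
  have cons: "adjoint A x0 + adjoint B y0 = c" using kf(1) by (simp add: At_def Bt_def)
  have Lz: "lagrangian f1 f2 h1 h2 A B c x0 y0 z = primal_obj f1 f2 h1 h2 x0 y0" for z
    using cons by (simp add: lagrangian_def)
  have po: "primal_optimal f1 f2 h1 h2 A B c x0 y0"
    unfolding primal_optimal_def
  proof (intro conjI allI impI cons)
    fix u v assume f: "adjoint A u + adjoint B v = c"
    have "primal_obj f1 f2 h1 h2 x0 y0 = lagrangian f1 f2 h1 h2 A B c x0 y0 z0" by (simp add: Lz)
    also have "\<dots> \<le> lagrangian f1 f2 h1 h2 A B c u v z0" by (rule lagr_ge[OF kkt])
    also have "\<dots> = primal_obj f1 f2 h1 h2 u v" using f by (simp add: lagrangian_def)
    finally show "primal_obj f1 f2 h1 h2 x0 y0 \<le> primal_obj f1 f2 h1 h2 u v" .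
  qed
  have "dual_fun f1 f2 h1 h2 A B c z' \<le> dual_fun f1 f2 h1 h2 A B c z0" for z'
  proof -
    have "dual_fun f1 f2 h1 h2 A B c z' \<le> lagrangian f1 f2 h1 h2 A B c x0 y0 z'"
      unfolding dual_fun_def by (rule INF_lower2[of "(x0, y0)"]) auto
    also have "\<dots> = lagrangian f1 f2 h1 h2 A B c x0 y0 z0" by (simp add: Lz)
    also have "\<dots> \<le> dual_fun f1 f2 h1 h2 A B c z0"
      unfolding dual_fun_def by (rule INF_greatest) (use lagr_ge[OF kkt] in auto)
    finally show ?thesis .
  qed
  then show ?thesis using po by (simp add: dual_optimal_def)
qed

end

theorem mainTheorem5:
  fixes f1 :: "'x::euclidean_space \<Rightarrow> real" and gf1 :: "'x \<Rightarrow> 'x"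
    and f2 :: "'x \<Rightarrow> ereal"
    and h1 :: "'y::euclidean_space \<Rightarrow> real" and gh1 :: "'y \<Rightarrow> 'y"
    and h2 :: "'y \<Rightarrow> ereal"
    and A :: "'z::euclidean_space \<Rightarrow> 'x" and B :: "'z \<Rightarrow> 'y" and c :: 'z
    and SF SFh S :: "'x \<Rightarrow> 'x" and SH SHh T :: "'y \<Rightarrow> 'y"
    and \<sigma> \<rho> lam :: real
    and x xt :: "nat \<Rightarrow> 'x" and y yt :: "nat \<Rightarrow> 'y" and z zt :: "nat \<Rightarrow> 'z"
    and xb :: 'x and yb :: 'y and zb :: 'z
  defines "At \<equiv> adjoint A" and "Bt \<equiv> adjoint B"
  defines "F \<equiv> (\<lambda>u. SFh u + S u + \<sigma> *\<^sub>R A (At u))"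
  defines "H \<equiv> (\<lambda>v. SHh v + T v + \<sigma> *\<^sub>R B (Bt v))"
  defines "Psi \<equiv> (\<lambda>k. (1 / (\<sigma> * \<rho>)) * (norm (z k - zb + (\<sigma> * (\<rho> - 1)) *\<^sub>R At (x k - xb)))\<^sup>2
                      + \<sigma> * (2 - \<rho>) * (norm (At (x k - xb)))\<^sup>2
                      + (1 / \<rho>) * qn (opadd SFh S) (xt (k + 1) - xb)
                      + (1 / \<rho>) * qn (opadd SHh T) (yt k - yb))"
  defines "delta \<equiv> (\<lambda>k. qn (\<lambda>u. (1/2) *\<^sub>R SF u) (xt (k + 1) - x (k + 1))
                      + qn (\<lambda>v. (1/2) *\<^sub>R SH v + (2 - \<rho>) *\<^sub>R (SHh v + T v)) (yt k - y k)
                      + (1 - lam) * (2 - \<rho>) * qn (opadd SFh S) (xt k - x k)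
                      + \<sigma> * (2 * lam - 1) * (2 - \<rho>) * (norm (At (x (k + 1)) + Bt (y k) - c))\<^sup>2
                      + (\<sigma> * (1 - lam) * (2 - \<rho>) / 2) * (norm (Bt (y k - y (k - 1))))\<^sup>2
                      + (lam * (2 - \<rho>)\<^sup>2 / \<rho>) * qn F (x (k + 1) - x k))"
  defines "xi \<equiv> (\<lambda>k. qn SFh (xt (k + 1) - x (k + 1)) + qn SHh (yt k - y k))"
  defines "E \<equiv> (\<lambda>k. Psi k + (2 - \<rho>) * qn (opadd SFh S) (xt k - x k)
                      + \<sigma> * (1 - lam) * (2 - \<rho>) * (norm (At (x k) + Bt (y (k - 1)) - c))\<^sup>2)"
  assumes linA: "linear A" and linB: "linear B"
  (* f1, h1: convex, C^1 with globally Lipschitz gradients, with the two-sided quadratic bounds *)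
  and f1_convex: "convex_on UNIV f1"
  and f1_grad: "\<And>u. (f1 has_derivative (\<lambda>d. gf1 u \<bullet> d)) (at u)"
  and f1_lip: "\<exists>L. \<forall>u v. norm (gf1 u - gf1 v) \<le> L * norm (u - v)"
  and h1_convex: "convex_on UNIV h1"
  and h1_grad: "\<And>v. (h1 has_derivative (\<lambda>d. gh1 v \<bullet> d)) (at v)"
  and h1_lip: "\<exists>L. \<forall>u v. norm (gh1 u - gh1 v) \<le> L * norm (u - v)"
  and SF_psd: "psd_op SF" and SFh_psd: "psd_op SFh" and SF_le: "psd_op (\<lambda>u. SFh u - SF u)"
  and SH_psd: "psd_op SH" and SHh_psd: "psd_op SHh" and SH_le: "psd_op (\<lambda>v. SHh v - SH v)"
  and f1_bounds: "\<And>u u'. (1/2) * qn SF (u - u') \<le> f1 u - f1 u' - (u - u') \<bullet> gf1 u'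
                        \<and> f1 u - f1 u' - (u - u') \<bullet> gf1 u' \<le> (1/2) * qn SFh (u - u')"
  and h1_bounds: "\<And>v v'. (1/2) * qn SH (v - v') \<le> h1 v - h1 v' - (v - v') \<bullet> gh1 v'
                        \<and> h1 v - h1 v' - (v - v') \<bullet> gh1 v' \<le> (1/2) * qn SHh (v - v')"
  (* f2, h2: closed proper convex *)
  and f2_cpc: "closed_fun f2 \<and> proper_fun f2 \<and> convex_fun f2"
  and h2_cpc: "closed_fun h2 \<and> proper_fun h2 \<and> convex_fun h2"
  (* constraint qualification *)
  and CQ: "\<exists>x0 y0. (x0, y0) \<in> rel_interior (edom f2 \<times> edom h2) \<and> At x0 + Bt y0 = c"
  (* algorithm parameters *)
  and sigma_pos: "\<sigma> > 0" and rho: "0 < \<rho>" "\<rho> < 2"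
  and S_psd: "psd_op S" and T_psd: "psd_op T"
  and F_pd: "pd_op F" and H_pd: "pd_op H"
  and init: "xt 0 \<in> edom f2" "yt 0 \<in> edom h2"
  (* iterations of G-ADMM-M *)
  and x_step: "\<And>k u. f2 (x k) + ereal ((1/2) * (x k \<bullet> F (x k))
              + (gf1 (xt k) + \<sigma> *\<^sub>R A (At (xt k) + Bt (yt k) - c + (1 / \<sigma>) *\<^sub>R zt k) - F (xt k)) \<bullet> x k)
           \<le> f2 u + ereal ((1/2) * (u \<bullet> F u)
              + (gf1 (xt k) + \<sigma> *\<^sub>R A (At (xt k) + Bt (yt k) - c + (1 / \<sigma>) *\<^sub>R zt k) - F (xt k)) \<bullet> u)"
  and z_step: "\<And>k. z k = zt k + \<sigma> *\<^sub>R (At (x k) + Bt (yt k) - c)"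
  and y_step: "\<And>k v. h2 (y k) + ereal ((1/2) * (y k \<bullet> H (y k))
              + (gh1 (yt k) + \<sigma> *\<^sub>R B (At (x k) + Bt (yt k) - c + (1 / \<sigma>) *\<^sub>R z k) - H (yt k)) \<bullet> y k)
           \<le> h2 v + ereal ((1/2) * (v \<bullet> H v)
              + (gh1 (yt k) + \<sigma> *\<^sub>R B (At (x k) + Bt (yt k) - c + (1 / \<sigma>) *\<^sub>R z k) - H (yt k)) \<bullet> v)"
  and relax: "\<And>k. xt (Suc k) = xt k + \<rho> *\<^sub>R (x k - xt k)"
             "\<And>k. yt (Suc k) = yt k + \<rho> *\<^sub>R (y k - yt k)"
             "\<And>k. zt (Suc k) = zt k + \<rho> *\<^sub>R (z k - zt k)"
  (* KKT point and lambda *)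
  and KKT: "(xb, yb, zb) \<in> Wstar gf1 f2 gh1 h2 A B c"
  and lam: "0 < lam" "lam \<le> 1"
  shows "(\<forall>k::nat. k > 1 \<longrightarrow> E k - E (k + 1) \<ge> delta k - xi k)
       \<and> ((1/2 < lam \<and> pd_op (opadd SHh T) \<and> pd_op F \<and> pd_op H \<and> summable xi) \<longrightarrow>
          (\<exists>xs ys zs. x \<longlonglongrightarrow> xs \<and> y \<longlonglongrightarrow> ys \<and> z \<longlonglongrightarrow> zs
             \<and> primal_optimal f1 f2 h1 h2 A B c xs ys
             \<and> dual_optimal f1 f2 h1 h2 A B c zs
             \<and> (xs, ys, zs) \<in> Wstar gf1 f2 gh1 h2 A B c))"
proof -
  interpret G: gadmm f1 gf1 f2 h1 gh1 h2 A B c SF SFh S SH SHh T \<sigma> \<rho> x xt y yt z zt At Bt F H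
  proof (rule gadmm.intro)
    show "At = adjoint A" by (simp add: At_def)
    show "Bt = adjoint B" by (simp add: Bt_def)
    show "F = (\<lambda>u. SFh u + S u + \<sigma> *\<^sub>R A (At u))" by (simp add: F_def)
    show "H = (\<lambda>v. SHh v + T v + \<sigma> *\<^sub>R B (Bt v))" by (simp add: H_def)
  qed (fact linA linB SF_psd SFh_psd SF_le SH_psd SHh_psd SH_le f1_bounds h1_bounds f2_cpc h2_cpc sigma_pos rho
         S_psd T_psd F_pd H_pd x_step z_step y_step relax)+
  have EE: "E = G.E lam xb yb zb"
    by (rule ext) (simp add: E_def Psi_def G.E_def G.Psi_def)
  have DD: "delta = G.delta lam"
    by (rule ext) (simp add: delta_def G.delta_def)
  have XX: "xi = G.xi"
    by (rule ext) (simp add: xi_def G.xi_def)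
  have P1: "\<forall>k::nat. k > 1 \<longrightarrow> E k - E (k + 1) \<ge> delta k - xi k"
  proof (intro allI impI)
    fix k :: nat assume "k > 1"
    then show "E k - E (k + 1) \<ge> delta k - xi k"
      unfolding EE DD XX using G.part1[OF KKT _ lam(2), of k] lam(1) by simp
  qed
  have P2: "(1/2 < lam \<and> pd_op (opadd SHh T) \<and> pd_op F \<and> pd_op H \<and> summable xi) \<longrightarrow>
          (\<exists>xs ys zs. x \<longlonglongrightarrow> xs \<and> y \<longlonglongrightarrow> ys \<and> z \<longlonglongrightarrow> zs
             \<and> primal_optimal f1 f2 h1 h2 A B c xs ys
             \<and> dual_optimal f1 f2 h1 h2 A B c zs
             \<and> (xs, ys, zs) \<in> Wstar gf1 f2 gh1 h2 A B c)"
  proof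
    assume a: "1/2 < lam \<and> pd_op (opadd SHh T) \<and> pd_op F \<and> pd_op H \<and> summable xi"
    then obtain xs ys zs where c: "x \<longlonglongrightarrow> xs" "y \<longlonglongrightarrow> ys" "z \<longlonglongrightarrow> zs" "(xs, ys, zs) \<in> Wstar gf1 f2 gh1 h2 A B c"
      using G.part2_conv[OF KKT _ lam(2) _ _ f1_lip h1_lip] unfolding XX by blast
    then show "\<exists>xs ys zs. x \<longlonglongrightarrow> xs \<and> y \<longlonglongrightarrow> ys \<and> z \<longlonglongrightarrow> zs
             \<and> primal_optimal f1 f2 h1 h2 A B c xs ys
             \<and> dual_optimal f1 f2 h1 h2 A B c zs
             \<and> (xs, ys, zs) \<in> Wstar gf1 f2 gh1 h2 A B c"
      using G.kkt_optimal[OF c(4)] by blast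
  qed
  show ?thesis using P1 P2 by blast
qed

end
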